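(* Let $a>0$, $\Omega=(-a,a)$, and let $K:\Omega\times\Omega\to\mathbb{R}$ belong to $\mathcal{C}^{(n,n)}(\Omega\times\Omega)$. Let $x_1,\ldots,x_n\in\mathbb{R}$, and for $\varepsilon\ge 0$ small enough that $\varepsilon x_i\in\Omega$ for all $i$ define $\mathbf{K}_\varepsilon=[K(\varepsilon x_i,\varepsilon x_j)]_{i,j=1}^{n}$. Then: 1. As $\varepsilon\to 0$, \[\det(\mathbf{K}_\varepsilon)=\varepsilon^{n(n-1)}\Big(\det(\mathbf{V}_{\le n-1})^2\det\mathbf{W}_{n-1}+\mathcal{O}(\varepsilon)\Big).\] 2. If, for some $\varepsilon_0>0$, $\mathbf{K}_\varepsilon$ is positive semidefinite for all $\varepsilon\in[0,\varepsilon_0]$, and its eigenvalues are ordered $\lambda_1(\varepsilon)\ge\cdots\ge\lambda_n(\varepsilon)\ge0$, then $\lambda_k(\varepsilon)=\mathcal{O}(\varepsilon^{2(k-1)})$ as $\varepsilon\to0$ for each $1\le k\le n$.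
   Context: $K\in\mathcal{C}^{(\ell,\ell)}(\Omega\times\Omega)$ means that all partial derivatives $K^{(i,j)}=\frac{\partial^{i+j}K}{\partial x^i\partial y^j}$ exist and are continuous on $\Omega\times\Omega$ for $0\le i,j\le \ell$. The Wronskian matrix is $\mathbf{W}_k=\Big[\frac{K^{(i,j)}(0,0)}{i!\,j!}\Big]_{i,j=0}^{k}\in\mathbb{R}^{(k+1)\times(k+1)}$. The Vandermonde matrix is $\mathbf{V}_{\le k}=[x_i^{j}]_{1\le i\le n,\,0\le j\le k}\in\mathbb{R}^{n\times(k+1)}$. *)

theory Defs
  imports "HOL-Library.Landau_Symbols" "HOL-Analysis.Derivative" "Jordan_Normal_Form.Char_Poly"
begin

definition pderiv_xy :: "(real \<Rightarrow> real \<Rightarrow> real) \<Rightarrow> nat \<Rightarrow> nat \<Rightarrow> real \<Rightarrow> real \<Rightarrow> real" where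
  "pderiv_xy K i j x y = (deriv ^^ i) (\<lambda>x'. (deriv ^^ j) (\<lambda>y'. K x' y') y) x"

text \<open>K in C^(l,l)(Omega x Omega) with Omega = (-a,a): all K^(i,j), i,j \<le> l, exist
  (each differentiation step is a genuine derivative on Omega) and are continuous on Omega x Omega.\<close>
definition Cll :: "nat \<Rightarrow> real \<Rightarrow> (real \<Rightarrow> real \<Rightarrow> real) \<Rightarrow> bool" where
  "Cll l a K \<longleftrightarrow>
     (\<forall>j<l. \<forall>x\<in>{-a<..<a}. \<forall>y\<in>{-a<..<a}. (\<lambda>y'. pderiv_xy K 0 j x y') differentiable (at y)) \<and>
     (\<forall>i<l. \<forall>j\<le>l. \<forall>x\<in>{-a<..<a}. \<forall>y\<in>{-a<..<a}. (\<lambda>x'. pderiv_xy K i j x' y) differentiable (at x)) \<and>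
     (\<forall>i\<le>l. \<forall>j\<le>l. continuous_on ({-a<..<a} \<times> {-a<..<a}) (\<lambda>(x, y). pderiv_xy K i j x y))"

definition wronskian :: "(real \<Rightarrow> real \<Rightarrow> real) \<Rightarrow> nat \<Rightarrow> real mat" where
  "wronskian K k = mat (k+1) (k+1) (\<lambda>(i, j). pderiv_xy K i j 0 0 / (fact i * fact j))"

text \<open>Vandermonde matrix V_{\<le>k} = [x_i^j], i = 1..n (stored as x 0, ..., x (n-1)), j = 0..k.\<close>
definition vandermonde :: "(nat \<Rightarrow> real) \<Rightarrow> nat \<Rightarrow> nat \<Rightarrow> real mat" where
  "vandermonde x n k = mat n (k+1) (\<lambda>(i, j). x i ^ j)"

definition kernel_mat :: "(real \<Rightarrow> real \<Rightarrow> real) \<Rightarrow> (nat \<Rightarrow> real) \<Rightarrow> nat \<Rightarrow> real \<Rightarrow> real mat" where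
  "kernel_mat K x n \<epsilon> = mat n n (\<lambda>(i, j). K (\<epsilon> * x i) (\<epsilon> * x j))"

definition psd_mat :: "real mat \<Rightarrow> bool" where
  "psd_mat A \<longleftrightarrow> A \<in> carrier_mat (dim_row A) (dim_row A) \<and> transpose_mat A = A \<and>
     (\<forall>v \<in> carrier_vec (dim_row A). v \<bullet> (A *\<^sub>v v) \<ge> 0)"

definition ordered_eigenvalues :: "real mat \<Rightarrow> (nat \<Rightarrow> real) \<Rightarrow> bool" where
  "ordered_eigenvalues A lam \<longleftrightarrow>
     char_poly A = (\<Prod>k<dim_row A. [:- lam k, 1:]) \<and>
     (\<forall>i j. i \<le> j \<and> j < dim_row A \<longrightarrow> lam j \<le> lam i)"

end

theory Submission
  imports Defs "Jordan_Normal_Form.Schur_Decomposition"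
begin

lemma moment_taylor:
  fixes diff :: "nat \<Rightarrow> real \<Rightarrow> real" and u x :: "nat \<Rightarrow> real"
  assumes D: "\<And>c s. c < m \<Longrightarrow> \<bar>s\<bar> < r \<Longrightarrow> (diff c has_real_derivative diff (Suc c) s) (at s)"
    and xs: "\<And>i. i < n \<Longrightarrow> \<bar>e * x i\<bar> < r"
    and B: "\<And>s. \<bar>s\<bar> < r \<Longrightarrow> \<bar>diff m s\<bar> \<le> B"
  shows "\<bar>(\<Sum>i<n. u i * diff 0 (e * x i)) - (\<Sum>c<m. diff c 0 / fact c * e^c * (\<Sum>i<n. u i * x i ^ c))\<bar>
         \<le> \<bar>e\<bar>^m * (\<Sum>i<n. \<bar>u i\<bar> * \<bar>x i\<bar>^m) * B / fact m"
proof -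
  have "\<exists>t. \<bar>t\<bar> \<le> \<bar>e * x i\<bar> \<and> diff 0 (e * x i) = (\<Sum>c<m. diff c 0 / (fact c) * (e * x i) ^ c) + diff m t / (fact m) * (e * x i) ^ m"
    if i: "i < n" for i
  proof (rule Maclaurin_bi_le[where diff=diff and f="diff 0"])
    show "\<forall>c t. c < m \<and> \<bar>t\<bar> \<le> \<bar>e * x i\<bar> \<longrightarrow> (diff c has_real_derivative diff (Suc c) t) (at t)"
    proof (intro allI impI)
      fix c t assume "c < m \<and> \<bar>t\<bar> \<le> \<bar>e * x i\<bar>"
      then show "(diff c has_real_derivative diff (Suc c) t) (at t)"
        using xs[OF i] by (intro D) auto
    qed
  qed simp
  hence "\<forall>i\<in>{..<n}. \<exists>t. \<bar>t\<bar> \<le> \<bar>e * x i\<bar> \<and> diff 0 (e * x i) = (\<Sum>c<m. diff c 0 / (fact c) * (e * x i) ^ c) + diff m t / (fact m) * (e * x i) ^ m"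
    by blast
  from bchoice[OF this] obtain t where t0: "\<forall>i\<in>{..<n}. \<bar>t i\<bar> \<le> \<bar>e * x i\<bar> \<and> diff 0 (e * x i) = (\<Sum>c<m. diff c 0 / (fact c) * (e * x i) ^ c) + diff m (t i) / (fact m) * (e * x i) ^ m"
    by blast
  have t: "\<And>i. i < n \<Longrightarrow> \<bar>t i\<bar> \<le> \<bar>e * x i\<bar> \<and> diff 0 (e * x i) = (\<Sum>c<m. diff c 0 / (fact c) * (e * x i) ^ c) + diff m (t i) / (fact m) * (e * x i) ^ m"
    using t0 by blast
  have "(\<Sum>i<n. u i * diff 0 (e * x i)) = (\<Sum>i<n. u i * ((\<Sum>c<m. diff c 0 / (fact c) * (e * x i) ^ c) + diff m (t i) / (fact m) * (e * x i) ^ m))"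
    using t by (intro sum.cong) auto
  also have "\<dots> = (\<Sum>c<m. diff c 0 / fact c * e^c * (\<Sum>i<n. u i * x i ^ c)) + (\<Sum>i<n. u i * (diff m (t i) / (fact m) * (e * x i) ^ m))"
  proof -
    have 1: "(\<Sum>i<n. u i * (\<Sum>c<m. diff c 0 / (fact c) * (e * x i) ^ c)) = (\<Sum>i<n. \<Sum>c<m. diff c 0 / fact c * e^c * (u i * x i ^ c))"
      by (simp add: sum_distrib_left power_mult_distrib mult_ac)
    also have "\<dots> = (\<Sum>c<m. \<Sum>i<n. diff c 0 / fact c * e^c * (u i * x i ^ c))"
      by (rule sum.swap)
    also have "\<dots> = (\<Sum>c<m. diff c 0 / fact c * e^c * (\<Sum>i<n. u i * x i ^ c))"
      by (simp add: sum_distrib_left)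
    finally show ?thesis by (simp add: distrib_left sum.distrib)
  qed
  finally have eq: "(\<Sum>i<n. u i * diff 0 (e * x i)) - (\<Sum>c<m. diff c 0 / fact c * e^c * (\<Sum>i<n. u i * x i ^ c)) = (\<Sum>i<n. u i * (diff m (t i) / (fact m) * (e * x i) ^ m))"
    by simp
  have "\<bar>\<Sum>i<n. u i * (diff m (t i) / (fact m) * (e * x i) ^ m)\<bar> \<le> (\<Sum>i<n. \<bar>u i * (diff m (t i) / (fact m) * (e * x i) ^ m)\<bar>)"
    by (rule sum_abs)
  also have "\<dots> \<le> (\<Sum>i<n. \<bar>e\<bar>^m * (\<bar>u i\<bar> * \<bar>x i\<bar>^m) * B / fact m)"
  proof (rule sum_mono)
    fix i assume "i \<in> {..<n}"
    hence i: "i < n" by simp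
    have "\<bar>t i\<bar> < r" using t[OF i] xs[OF i] by linarith
    hence b: "\<bar>diff m (t i)\<bar> \<le> B" by (rule B)
    have "\<bar>u i * (diff m (t i) / (fact m) * (e * x i) ^ m)\<bar> = \<bar>e\<bar>^m * (\<bar>u i\<bar> * \<bar>x i\<bar>^m) * \<bar>diff m (t i)\<bar> / fact m"
      by (simp add: abs_mult power_abs power_mult_distrib)
    also have "\<dots> \<le> \<bar>e\<bar>^m * (\<bar>u i\<bar> * \<bar>x i\<bar>^m) * B / fact m"
      by (intro divide_right_mono mult_left_mono b) auto
    finally show "\<bar>u i * (diff m (t i) / (fact m) * (e * x i) ^ m)\<bar> \<le> \<bar>e\<bar>^m * (\<bar>u i\<bar> * \<bar>x i\<bar>^m) * B / fact m" .
  qed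
  also have "\<dots> = \<bar>e\<bar>^m * (\<Sum>i<n. \<bar>u i\<bar> * \<bar>x i\<bar>^m) * B / fact m"
    by (simp add: sum_distrib_left sum_distrib_right sum_divide_distrib)
  finally show ?thesis using eq by simp
qed

lemma pderiv_00[simp]: "pderiv_xy K 0 0 x y = K x y"
  by (simp add: pderiv_xy_def)

lemma Cll_Dy:
  assumes "Cll n a K" "j < n" "\<bar>x\<bar> < a" "\<bar>y\<bar> < a"
  shows "((\<lambda>y'. pderiv_xy K 0 j x y') has_real_derivative pderiv_xy K 0 (Suc j) x y) (at y)"
proof -
  have "(\<lambda>y'. pderiv_xy K 0 j x y') differentiable (at y)"
  proof -
    have "x \<in> {-a<..<a}" "y \<in> {-a<..<a}" using assms by auto
    thus ?thesis using assms unfolding Cll_def by blast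
  qed
  hence "((\<lambda>y'. pderiv_xy K 0 j x y') has_real_derivative deriv (\<lambda>y'. pderiv_xy K 0 j x y') y) (at y)"
    by (simp add: DERIV_deriv_iff_real_differentiable)
  moreover have "deriv (\<lambda>y'. pderiv_xy K 0 j x y') y = pderiv_xy K 0 (Suc j) x y"
    by (simp add: pderiv_xy_def)
  ultimately show ?thesis by simp
qed

lemma Cll_Dx:
  assumes "Cll n a K" "i < n" "j \<le> n" "\<bar>x\<bar> < a" "\<bar>y\<bar> < a"
  shows "((\<lambda>x'. pderiv_xy K i j x' y) has_real_derivative pderiv_xy K (Suc i) j x y) (at x)"
proof -
  have "(\<lambda>x'. pderiv_xy K i j x' y) differentiable (at x)"
  proof -
    have "x \<in> {-a<..<a}" "y \<in> {-a<..<a}" using assms by auto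
    thus ?thesis using assms unfolding Cll_def by blast
  qed
  hence "((\<lambda>x'. pderiv_xy K i j x' y) has_real_derivative deriv (\<lambda>x'. pderiv_xy K i j x' y) x) (at x)"
    by (simp add: DERIV_deriv_iff_real_differentiable)
  moreover have "deriv (\<lambda>x'. pderiv_xy K i j x' y) x = pderiv_xy K (Suc i) j x y"
    by (simp add: pderiv_xy_def)
  ultimately show ?thesis by simp
qed

lemma Cll_bound:
  assumes "Cll n a K" "a > 0"
  shows "\<exists>B. \<forall>i\<le>n. \<forall>j\<le>n. \<forall>s t. \<bar>s\<bar> \<le> a/2 \<longrightarrow> \<bar>t\<bar> \<le> a/2 \<longrightarrow> \<bar>pderiv_xy K i j s t\<bar> \<le> B"
proof -
  have "\<exists>B. \<forall>s t. \<bar>s\<bar> \<le> a/2 \<longrightarrow> \<bar>t\<bar> \<le> a/2 \<longrightarrow> \<bar>pderiv_xy K i j s t\<bar> \<le> B"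
    if ij: "i \<le> n" "j \<le> n" for i j
  proof -
    have c: "continuous_on ({-a<..<a} \<times> {-a<..<a}) (\<lambda>(x, y). pderiv_xy K i j x y)"
      using assms ij unfolding Cll_def by auto
    have sub: "{-a/2..a/2} \<times> {-a/2..a/2} \<subseteq> {-a<..<a} \<times> {-a<..<a}"
      using assms(2) by auto
    have "compact ((\<lambda>(x, y). pderiv_xy K i j x y) ` ({-a/2..a/2} \<times> {-a/2..a/2}))"
      by (intro compact_continuous_image continuous_on_subset[OF c sub] compact_Times compact_Icc)
    then obtain B where B: "\<forall>z\<in>(\<lambda>(x, y). pderiv_xy K i j x y) ` ({-a/2..a/2} \<times> {-a/2..a/2}). norm z \<le> B"
      using compact_imp_bounded bounded_iff by metis
    show ?thesis
    proof (intro exI allI impI)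
      fix s t :: real assume "\<bar>s\<bar> \<le> a/2" "\<bar>t\<bar> \<le> a/2"
      hence "(s,t) \<in> {-a/2..a/2} \<times> {-a/2..a/2}" by auto
      thus "\<bar>pderiv_xy K i j s t\<bar> \<le> B" using B by force
    qed
  qed
  hence "\<forall>ij\<in>{..n}\<times>{..n}. \<exists>B. \<forall>s t. \<bar>s\<bar> \<le> a/2 \<longrightarrow> \<bar>t\<bar> \<le> a/2 \<longrightarrow> \<bar>pderiv_xy K (fst ij) (snd ij) s t\<bar> \<le> B"
    by auto
  from bchoice[OF this] obtain Bf where Bf: "\<forall>ij\<in>{..n}\<times>{..n}. \<forall>s t. \<bar>s\<bar> \<le> a/2 \<longrightarrow> \<bar>t\<bar> \<le> a/2 \<longrightarrow> \<bar>pderiv_xy K (fst ij) (snd ij) s t\<bar> \<le> Bf ij"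
    by blast
  show ?thesis
  proof (intro exI allI impI)
    fix i j s t assume ij: "i \<le> n" "j \<le> n" and st: "\<bar>s\<bar> \<le> a/2" "\<bar>t\<bar> \<le> a/2"
    have "\<bar>pderiv_xy K i j s t\<bar> \<le> Bf (i,j)" using Bf ij st by force
    also have "\<dots> \<le> \<bar>Bf (i,j)\<bar>" by simp
    also have "\<dots> \<le> (\<Sum>ij\<in>{..n}\<times>{..n}. \<bar>Bf ij\<bar>)"
      by (rule member_le_sum) (use ij in auto)
    finally show "\<bar>pderiv_xy K i j s t\<bar> \<le> (\<Sum>ij\<in>{..n}\<times>{..n}. \<bar>Bf ij\<bar>)" .
  qed
qed



lemma sum_delta_lt: "(\<Sum>c<(m::nat). f c * (if c = q then 1 else 0)) = (if q < m then f q else (0::real))"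
  by (induct m) (auto simp: less_Suc_eq)

lemma entry_est:
  fixes K :: "real \<Rightarrow> real \<Rightarrow> real" and T :: "nat \<Rightarrow> nat \<Rightarrow> real" and x :: "nat \<Rightarrow> real"
  assumes Cll: "Cll n a K" and a: "a > 0"
    and B: "\<forall>i\<le>n. \<forall>j\<le>n. \<forall>s t. \<bar>s\<bar> \<le> a/2 \<longrightarrow> \<bar>t\<bar> \<le> a/2 \<longrightarrow> \<bar>pderiv_xy K i j s t\<bar> \<le> B"
    and delta: "\<And>b c. b < n \<Longrightarrow> c < n \<Longrightarrow> (\<Sum>j<n. T b j * x j ^ c) = (if c = b then 1 else 0)"
    and pq: "p < n" "q < n"
  shows "\<exists>C. \<forall>\<epsilon>. 0 \<le> \<epsilon> \<and> \<epsilon> \<le> 1 \<and> (\<forall>i<n. \<bar>\<epsilon> * x i\<bar> < a/2) \<longrightarrow>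
     \<bar>(\<Sum>j<n. T q j * (\<Sum>i<n. T p i * K (\<epsilon> * x i) (\<epsilon> * x j))) - \<epsilon>^(p+q) * (pderiv_xy K p q 0 0 / (fact p * fact q))\<bar>
       \<le> C * \<epsilon>^(p+q+1)"
proof -
  have B0: "B \<ge> 0" using B[rule_format, of 0 0 0 0] a by auto
  define S1 where "S1 = (\<Sum>i<n. \<bar>T p i\<bar> * \<bar>x i\<bar>^p)"
  define S2 where "S2 = (\<Sum>j<n. \<bar>T q j\<bar> * \<bar>x j\<bar>^n)"
  define S3 where "S3 = (\<Sum>i<n. \<bar>T p i\<bar> * \<bar>x i\<bar>^n)"
  have S: "S1 \<ge> 0" "S2 \<ge> 0" "S3 \<ge> 0" unfolding S1_def S2_def S3_def by (auto intro!: sum_nonneg)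
  define C where "C = S1*S2*B/(fact p * fact n) + S3*B/(fact n * fact q)"
  show ?thesis
  proof (intro exI[of _ C] allI impI)
    fix \<epsilon> :: real assume e: "0 \<le> \<epsilon> \<and> \<epsilon> \<le> 1 \<and> (\<forall>i<n. \<bar>\<epsilon> * x i\<bar> < a/2)"
    hence e0: "0 \<le> \<epsilon>" and e1: "\<epsilon> \<le> 1" and ex: "\<And>i. i < n \<Longrightarrow> \<bar>\<epsilon> * x i\<bar> < a/2" by auto
    define h where "h c t = (\<Sum>i<n. T p i * pderiv_xy K 0 c (\<epsilon> * x i) t)" for c t
    have exa: "\<And>i. i < n \<Longrightarrow> \<bar>\<epsilon> * x i\<bar> < a" using ex a by fastforce
    have hD: "(h c has_real_derivative h (Suc c) t) (at t)" if "c < n" "\<bar>t\<bar> < a/2" for c t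
      unfolding h_def
      by (intro DERIV_sum DERIV_cmult Cll_Dy[OF Cll] that) (use exa that a in auto)
    have hn: "\<bar>h n t\<bar> \<le> \<epsilon>^p * S1 * B / fact p" if t: "\<bar>t\<bar> < a/2" for t
    proof -
      have "\<bar>(\<Sum>i<n. T p i * pderiv_xy K 0 n (\<epsilon> * x i) t) - (\<Sum>c<p. pderiv_xy K c n 0 t / fact c * \<epsilon>^c * (\<Sum>i<n. T p i * x i ^ c))\<bar>
         \<le> \<bar>\<epsilon>\<bar>^p * (\<Sum>i<n. \<bar>T p i\<bar> * \<bar>x i\<bar>^p) * B / fact p"
        by (rule moment_taylor[where diff="\<lambda>c s. pderiv_xy K c n s t" and r="a/2"])
           (use ex t pq B in \<open>auto intro!: Cll_Dx[OF Cll]\<close>)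
      moreover have "(\<Sum>c<p. pderiv_xy K c n 0 t / fact c * \<epsilon>^c * (\<Sum>i<n. T p i * x i ^ c)) = 0"
        by (intro sum.neutral) (use delta pq in auto)
      ultimately show ?thesis using e0 unfolding h_def S1_def by simp
    qed
    have step1: "\<bar>(\<Sum>j<n. T q j * h 0 (\<epsilon> * x j)) - h q 0 / fact q * \<epsilon>^q\<bar> \<le> \<epsilon>^n * S2 * (\<epsilon>^p * S1 * B / fact p) / fact n"
    proof -
      have "\<bar>(\<Sum>j<n. T q j * h 0 (\<epsilon> * x j)) - (\<Sum>c<n. h c 0 / fact c * \<epsilon>^c * (\<Sum>j<n. T q j * x j ^ c))\<bar>
         \<le> \<bar>\<epsilon>\<bar>^n * (\<Sum>j<n. \<bar>T q j\<bar> * \<bar>x j\<bar>^n) * (\<epsilon>^p * S1 * B / fact p) / fact n"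
        by (rule moment_taylor[where diff="h" and r="a/2"]) (use ex hD hn in auto)
      moreover have "(\<Sum>c<n. h c 0 / fact c * \<epsilon>^c * (\<Sum>j<n. T q j * x j ^ c)) = h q 0 / fact q * \<epsilon>^q"
        using sum_delta_lt[of "\<lambda>c. h c 0 / fact c * \<epsilon>^c" q n] delta pq by simp
      ultimately show ?thesis using e0 unfolding S2_def by simp
    qed
    have step3: "\<bar>h q 0 - pderiv_xy K p q 0 0 / fact p * \<epsilon>^p\<bar> \<le> \<epsilon>^n * S3 * B / fact n"
    proof -
      have "\<bar>(\<Sum>i<n. T p i * pderiv_xy K 0 q (\<epsilon> * x i) 0) - (\<Sum>c<n. pderiv_xy K c q 0 0 / fact c * \<epsilon>^c * (\<Sum>i<n. T p i * x i ^ c))\<bar>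
         \<le> \<bar>\<epsilon>\<bar>^n * (\<Sum>i<n. \<bar>T p i\<bar> * \<bar>x i\<bar>^n) * B / fact n"
        by (rule moment_taylor[where diff="\<lambda>c s. pderiv_xy K c q s 0" and r="a/2"])
           (use ex a pq B in \<open>auto intro!: Cll_Dx[OF Cll]\<close>)
      moreover have "(\<Sum>c<n. pderiv_xy K c q 0 0 / fact c * \<epsilon>^c * (\<Sum>i<n. T p i * x i ^ c)) = pderiv_xy K p q 0 0 / fact p * \<epsilon>^p"
        using sum_delta_lt[of "\<lambda>c. pderiv_xy K c q 0 0 / fact c * \<epsilon>^c" p n] delta pq by simp
      ultimately show ?thesis using e0 unfolding h_def S3_def by simp
    qed
    have h0: "h 0 (\<epsilon> * x j) = (\<Sum>i<n. T p i * K (\<epsilon> * x i) (\<epsilon> * x j))" for j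
      unfolding h_def by simp
    define X where "X = (\<Sum>j<n. T q j * (\<Sum>i<n. T p i * K (\<epsilon> * x i) (\<epsilon> * x j)))"
    define Y where "Y = h q 0"
    define P where "P = pderiv_xy K p q 0 0"
    have s1: "\<bar>X - Y / fact q * \<epsilon>^q\<bar> \<le> \<epsilon>^(n+p) * (S1*S2*B/(fact p * fact n))"
      using step1 unfolding X_def Y_def h0 by (simp add: power_add field_simps)
    have s3: "\<bar>\<epsilon>^q / fact q * (Y - P / fact p * \<epsilon>^p)\<bar> \<le> \<epsilon>^(q+n) * (S3*B/(fact n * fact q))"
    proof -
      have "\<bar>\<epsilon>^q / fact q * (Y - P / fact p * \<epsilon>^p)\<bar> = \<epsilon>^q / fact q * \<bar>Y - P / fact p * \<epsilon>^p\<bar>"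
        using e0 by (simp add: abs_mult)
      also have "\<dots> \<le> \<epsilon>^q / fact q * (\<epsilon>^n * S3 * B / fact n)"
        using step3 e0 unfolding Y_def P_def by (intro mult_left_mono) auto
      finally show ?thesis by (simp add: power_add field_simps)
    qed
    have pw1: "\<epsilon>^(n+p) \<le> \<epsilon>^(p+q+1)" using e0 e1 pq by (intro power_decreasing) auto
    have pw2: "\<epsilon>^(q+n) \<le> \<epsilon>^(p+q+1)" using e0 e1 pq by (intro power_decreasing) auto
    have c1: "S1*S2*B/(fact p * fact n) \<ge> 0" "S3*B/(fact n * fact q) \<ge> 0" using S B0 by auto
    have eqX: "X - \<epsilon>^(p+q) * (P / (fact p * fact q)) = (X - Y / fact q * \<epsilon>^q) + \<epsilon>^q / fact q * (Y - P / fact p * \<epsilon>^p)"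
      by (simp add: power_add field_simps)
    have "\<bar>X - \<epsilon>^(p+q) * (P / (fact p * fact q))\<bar> \<le> \<epsilon>^(n+p) * (S1*S2*B/(fact p * fact n)) + \<epsilon>^(q+n) * (S3*B/(fact n * fact q))"
      unfolding eqX by (rule order_trans[OF abs_triangle_ineq add_mono[OF s1 s3]])
    also have "\<dots> \<le> \<epsilon>^(p+q+1) * (S1*S2*B/(fact p * fact n)) + \<epsilon>^(p+q+1) * (S3*B/(fact n * fact q))"
      using pw1 pw2 c1 by (intro add_mono mult_right_mono) auto
    also have "\<dots> = C * \<epsilon>^(p+q+1)" unfolding C_def by (simp add: algebra_simps)
    finally show "\<bar>(\<Sum>j<n. T q j * (\<Sum>i<n. T p i * K (\<epsilon> * x i) (\<epsilon> * x j))) - \<epsilon>^(p+q) * (pderiv_xy K p q 0 0 / (fact p * fact q))\<bar> \<le> C * \<epsilon>^(p+q+1)"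
      unfolding X_def P_def .
  qed
qed



lemma conjugate_real_vec[simp]: "conjugate (v :: real vec) = v"
  by (rule eq_vecI) (auto simp: conjugate_vec_def)

lemma orthonormal_completion:
  fixes v :: "real vec"
  assumes v: "v \<in> carrier_vec n" and v0: "v \<noteq> 0\<^sub>v n"
  shows "\<exists>W \<in> carrier_mat n n. transpose_mat W * W = 1\<^sub>m n \<and> col W 0 = (1 / sqrt (v \<bullet> v)) \<cdot>\<^sub>v v"
proof -
  interpret cof_vec_space n "TYPE(real)" .
  define b where "b = basis_completion v"
  define ws where "ws = gram_schmidt n b"
  from basis_completion[OF v v0, folded b_def]
  have dist_b: "distinct b" and indep: "\<not> lin_dep (set b)" and b: "set b \<subseteq> carrier_vec n"
    and span_b: "span (set b) = carrier_vec n" and bas: "basis (set b)" by auto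
  have len_b: "length b = n"
  proof -
    have "card (set b) = dim" using bas dim_basis[of "set b"] by simp
    thus ?thesis using distinct_card[OF dist_b] dim_is_n by simp
  qed
  have hdb: "hd b = v" unfolding b_def basis_completion_def Let_def by simp
  define vs where "vs = tl b"
  have bv: "b = v # vs" unfolding vs_def b_def basis_completion_def Let_def by simp
  from gram_schmidt_result[OF b dist_b indep refl, folded ws_def]
  have ws: "set ws \<subseteq> carrier_vec n" "corthogonal ws" "length ws = n"
    by (auto simp: len_b)
  from gram_schmidt_hd[OF v, of vs, folded bv] have hdws: "hd ws = v" unfolding ws_def .
  have n0: "n > 0" using len_b bv by auto
  have ws0: "ws ! 0 = v" using hdws n0 ws(3) by (cases ws) auto
  have wsc: "i < n \<Longrightarrow> ws ! i \<in> carrier_vec n" for i using ws by auto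
  have orth: "i < n \<Longrightarrow> j < n \<Longrightarrow> (ws ! i \<bullet> ws ! j = 0) = (i \<noteq> j)" for i j
    using corthogonalD[OF ws(2), of i j] ws(3) by simp
  have pos: "i < n \<Longrightarrow> ws ! i \<bullet> ws ! i > 0" for i
  proof -
    assume i: "i < n"
    have "ws ! i \<bullet> ws ! i \<ge> 0" using wsc[OF i] by (simp add: scalar_prod_def sum_nonneg)
    moreover have "ws ! i \<bullet> ws ! i \<noteq> 0" using orth[OF i i] by simp
    ultimately show ?thesis by simp
  qed
  define ws' where "ws' = map (\<lambda>w. (1 / sqrt (w \<bullet> w)) \<cdot>\<^sub>v w) ws"
  have len': "length ws' = n" unfolding ws'_def using ws by simp
  have ws'i: "i < n \<Longrightarrow> ws' ! i = (1 / sqrt (ws ! i \<bullet> ws ! i)) \<cdot>\<^sub>v ws ! i" for i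
    unfolding ws'_def using ws by simp
  have ws'c: "i < n \<Longrightarrow> ws' ! i \<in> carrier_vec n" for i using ws'i wsc by simp
  define W where "W = mat_of_cols n ws'"
  have W: "W \<in> carrier_mat n n" unfolding W_def using mat_of_cols_carrier(1)[of n ws'] len' by simp
  have colW: "i < n \<Longrightarrow> col W i = ws' ! i" for i unfolding W_def using len' ws'c by simp
  have "transpose_mat W * W = 1\<^sub>m n"
  proof (rule eq_matI)
    show "dim_row (transpose_mat W * W) = dim_row (1\<^sub>m n)" "dim_col (transpose_mat W * W) = dim_col (1\<^sub>m n)"
      using W by auto
    fix i j assume "i < dim_row (1\<^sub>m n)" "j < dim_col (1\<^sub>m n)"
    hence i: "i < n" and j: "j < n" by auto
    have "(transpose_mat W * W) $$ (i, j) = ws' ! i \<bullet> ws' ! j"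
      using W i j colW by simp
    also have "\<dots> = (1 / sqrt (ws ! i \<bullet> ws ! i)) * (1 / sqrt (ws ! j \<bullet> ws ! j)) * (ws ! i \<bullet> ws ! j)"
      unfolding ws'i[OF i] ws'i[OF j] using wsc[OF i] wsc[OF j] by simp
    also have "\<dots> = 1\<^sub>m n $$ (i, j)"
    proof (cases "i = j")
      case True
      have p: "ws ! i \<bullet> ws ! i > 0" using pos[OF i] .
      have "sqrt (ws ! i \<bullet> ws ! i) * sqrt (ws ! i \<bullet> ws ! i) = ws ! i \<bullet> ws ! i"
        using p by simp
      thus ?thesis using True i p by (simp add: field_simps)
    next
      case False thus ?thesis using orth[OF i j] i j by simp
    qed
    finally show "(transpose_mat W * W) $$ (i, j) = 1\<^sub>m n $$ (i, j)" .
  qed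
  moreover have "col W 0 = (1 / sqrt (v \<bullet> v)) \<cdot>\<^sub>v v" using colW[OF n0] ws'i[OF n0] ws0 by simp
  ultimately show ?thesis using W by blast
qed




lemma spectral:
  fixes A :: "real mat"
  assumes "A \<in> carrier_mat n n" "transpose_mat A = A" "char_poly A = (\<Prod>e\<leftarrow>es. [:-e, 1:])"
  shows "\<exists>P \<in> carrier_mat n n. transpose_mat P * P = 1\<^sub>m n \<and>
           transpose_mat P * A * P = mat n n (\<lambda>(i,j). if i = j then es ! i else 0)"
  using assms
proof (induct es arbitrary: n A)
  case Nil
  from degree_monic_char_poly[OF Nil(1)] Nil(3) have n: "n = 0" by simp
  show ?case
    by (rule bexI[of _ "1\<^sub>m 0"]) (auto simp: n intro!: eq_matI)
next
  case (Cons e es n A)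
  from Cons have A: "A \<in> carrier_mat n n" and sym: "transpose_mat A = A" by auto
  have cp: "char_poly A = [: -e, 1 :] * (\<Prod>e \<leftarrow> es. [:- e, 1:])" using Cons(4) by simp
  have mon: "monic (\<Prod>e\<leftarrow> es. [:- e, 1:])" by (rule monic_prod_list, auto)
  have deg: "degree (char_poly A) = Suc (degree (\<Prod>e\<leftarrow> es. [:- e, 1:]))" unfolding cp
    by (subst degree_mult_eq, insert mon, auto)
  with degree_monic_char_poly[OF A] have n0: "n \<noteq> 0" by auto
  then obtain m where nm: "n = Suc m" by (cases n) auto
  have ev: "eigenvalue A e" unfolding eigenvalue_root_char_poly[OF A] cp by simp
  define v where "v = find_eigenvector A e"
  from find_eigenvector[OF A ev, folded v_def] A
  have v: "v \<in> carrier_vec n" and v0: "v \<noteq> 0\<^sub>v n" and Av: "A *\<^sub>v v = e \<cdot>\<^sub>v v"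
    unfolding eigenvector_def by auto
  obtain W where W: "W \<in> carrier_mat n n" and WtW: "transpose_mat W * W = 1\<^sub>m n"
    and colW0: "col W 0 = (1 / sqrt (v \<bullet> v)) \<cdot>\<^sub>v v"
    using orthonormal_completion[OF v v0] by blast
  have Wt: "transpose_mat W \<in> carrier_mat n n" using W by simp
  define A' where "A' = transpose_mat W * A * W"
  have A': "A' \<in> carrier_mat n n" unfolding A'_def using W A by auto
  have symA': "transpose_mat A' = A'"
  proof -
    have "transpose_mat A' = transpose_mat W * transpose_mat (transpose_mat W * A)"
      unfolding A'_def by (rule transpose_mult[of _ n n]) (use W A in auto)
    also have "transpose_mat (transpose_mat W * A) = transpose_mat A * W"
      by (subst transpose_mult[of _ n n]) (use W A in auto)
    finally show ?thesis unfolding A'_def sym using W A by (simp add: assoc_mult_mat[of _ n n _ n _ n])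
  qed
  have AW0: "A *\<^sub>v col W 0 = e \<cdot>\<^sub>v col W 0"
    unfolding colW0 using mult_mat_vec[OF A v] Av by (simp add: smult_smult_assoc mult.commute)
  have col0: "A' $$ (i, 0) = (if i = 0 then e else 0)" if i: "i < n" for i
  proof -
    have "A' $$ (i, 0) = (transpose_mat W * (A * W)) $$ (i, 0)"
      unfolding A'_def using W A by (simp add: assoc_mult_mat[of _ n n _ n _ n])
    also have "\<dots> = col W i \<bullet> (A *\<^sub>v col W 0)"
      using W A i n0 by (simp add: mult_mat_vec_def)
    also have "\<dots> = e * (col W i \<bullet> col W 0)"
      unfolding AW0 using W i n0 by simp
    also have "col W i \<bullet> col W 0 = (transpose_mat W * W) $$ (i, 0)"
      using W i n0 by simp
    also have "\<dots> = (if i = 0 then 1 else 0)" unfolding WtW using i n0 by simp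
    finally show ?thesis by simp
  qed
  have row0: "A' $$ (0, j) = (if j = 0 then e else 0)" if j: "j < n" for j
  proof -
    have "A' $$ (0, j) = transpose_mat A' $$ (j, 0)" using A' j n0 by simp
    thus ?thesis using col0[OF j] symA' by simp
  qed
  define A3 where "A3 = mat m m (\<lambda>(i,j). A' $$ (Suc i, Suc j))"
  have A3: "A3 \<in> carrier_mat m m" unfolding A3_def by simp
  have blk: "A' = four_block_mat (mat 1 1 (\<lambda>_. e)) (0\<^sub>m 1 m) (0\<^sub>m m 1) A3"
  proof (rule eq_matI)
    fix i j assume ij: "i < dim_row (four_block_mat (mat 1 1 (\<lambda>_. e)) (0\<^sub>m 1 m) (0\<^sub>m m 1) A3)"
      "j < dim_col (four_block_mat (mat 1 1 (\<lambda>_. e)) (0\<^sub>m 1 m) (0\<^sub>m m 1) A3)"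
    hence i: "i < Suc m" and j: "j < Suc m" using A3 by auto
    show "A' $$ (i, j) = four_block_mat (mat 1 1 (\<lambda>_. e)) (0\<^sub>m 1 m) (0\<^sub>m m 1) A3 $$ (i, j)"
    proof (cases "i = 0")
      case True thus ?thesis using row0[of j] j nm A3 by simp
    next
      case False
      show ?thesis
      proof (cases "j = 0")
        case True thus ?thesis using col0[of i] i nm A3 False by simp
      next
        case False2: False
        then obtain i' j' where "i = Suc i'" "j = Suc j'" using False by (cases i; cases j) auto
        thus ?thesis using i j A3 unfolding A3_def by simp
      qed
    qed
  qed (use A' A3 nm in auto)
  have simA: "similar_mat A' A"
    unfolding similar_mat_def similar_mat_wit_def Let_def
    apply (rule exI[of _ "transpose_mat W"], rule exI[of _ W])
    using A' A W WtW mat_mult_left_right_inverse[OF Wt W WtW] unfolding A'_def by auto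
  have "char_poly A' = char_poly A" by (rule char_poly_similar[OF simA])
  also have "char_poly A' = char_poly (mat 1 1 (\<lambda>_. e)) * char_poly A3"
    unfolding blk by (rule char_poly_four_block_zeros_col) (use A3 in auto)
  also have "char_poly (mat 1 1 (\<lambda>_. e)) = [: -e, 1 :]"
    by (simp add: char_poly_defs det_def sign_def)
  finally have cp3: "char_poly A3 = (\<Prod>e \<leftarrow> es. [:- e, 1:])" unfolding cp
    by (metis mult_cancel_left pCons_eq_0_iff zero_neq_one)
  have sym3: "transpose_mat A3 = A3"
  proof (rule eq_matI)
    fix i j assume "i < dim_row A3" "j < dim_col A3"
    hence i: "i < m" and j: "j < m" using A3 by auto
    have "A' $$ (Suc j, Suc i) = transpose_mat A' $$ (Suc i, Suc j)" using A' i j nm by simp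
    thus "transpose_mat A3 $$ (i, j) = A3 $$ (i, j)" using i j symA' unfolding A3_def by simp
  qed (use A3 in auto)
  from Cons(1)[OF A3 sym3 cp3] obtain P3 where P3: "P3 \<in> carrier_mat m m"
    and P3o: "transpose_mat P3 * P3 = 1\<^sub>m m"
    and P3d: "transpose_mat P3 * A3 * P3 = mat m m (\<lambda>(i,j). if i = j then es ! i else 0)" by blast
  define E where "E = four_block_mat (1\<^sub>m 1) (0\<^sub>m 1 m) (0\<^sub>m m 1) P3"
  have E: "E \<in> carrier_mat n n" unfolding E_def using P3 nm by auto
  have Et: "transpose_mat E = four_block_mat (1\<^sub>m 1) (0\<^sub>m 1 m) (0\<^sub>m m 1) (transpose_mat P3)"
    unfolding E_def by (subst transpose_four_block_mat) (use P3 in auto)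
  have EtE: "transpose_mat E * E = 1\<^sub>m n"
    unfolding Et unfolding E_def nm
    by (subst mult_four_block_mat[where ?nr1.0=1 and ?n1.0=1 and ?n2.0=m and ?nr2.0=m and ?nc1.0=1 and ?nc2.0=m]) (use P3 P3o in auto)
  have EtA'E: "transpose_mat E * A' * E = mat n n (\<lambda>(i,j). if i = j then (e # es) ! i else 0)"
  proof -
    have "transpose_mat E * A' * E = four_block_mat (mat 1 1 (\<lambda>_. e)) (0\<^sub>m 1 m) (0\<^sub>m m 1) (transpose_mat P3 * A3 * P3)"
    proof -
      have X1: "four_block_mat (1\<^sub>m 1) (0\<^sub>m 1 m) (0\<^sub>m m 1) (transpose_mat P3) * four_block_mat (mat 1 1 (\<lambda>_. e)) (0\<^sub>m 1 m) (0\<^sub>m m 1) A3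
         = four_block_mat (mat 1 1 (\<lambda>_. e)) (0\<^sub>m 1 m) (0\<^sub>m m 1) (transpose_mat P3 * A3)"
        by (subst mult_four_block_mat[where ?nr1.0=1 and ?n1.0=1 and ?n2.0=m and ?nr2.0=m and ?nc1.0=1 and ?nc2.0=m])
           (use P3 A3 in \<open>auto intro!: cong_four_block_mat eq_matI\<close>)
      have X2: "four_block_mat (mat 1 1 (\<lambda>_. e)) (0\<^sub>m 1 m) (0\<^sub>m m 1) (transpose_mat P3 * A3) * four_block_mat (1\<^sub>m 1) (0\<^sub>m 1 m) (0\<^sub>m m 1) P3
         = four_block_mat (mat 1 1 (\<lambda>_. e)) (0\<^sub>m 1 m) (0\<^sub>m m 1) (transpose_mat P3 * A3 * P3)"
        by (subst mult_four_block_mat[where ?nr1.0=1 and ?n1.0=1 and ?n2.0=m and ?nr2.0=m and ?nc1.0=1 and ?nc2.0=m])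
           (use P3 A3 in \<open>auto intro!: cong_four_block_mat eq_matI\<close>)
      show ?thesis unfolding Et unfolding E_def blk X1 X2 ..
    qed
    also have "\<dots> = mat n n (\<lambda>(i,j). if i = j then (e # es) ! i else 0)"
      unfolding P3d nm
    proof (rule eq_matI)
      fix i j assume "i < dim_row (mat (Suc m) (Suc m) (\<lambda>(i,j). if i = j then (e # es) ! i else 0))"
        "j < dim_col (mat (Suc m) (Suc m) (\<lambda>(i,j). if i = j then (e # es) ! i else 0))"
      hence i: "i < Suc m" and j: "j < Suc m" by auto
      show "four_block_mat (mat 1 1 (\<lambda>_. e)) (0\<^sub>m 1 m) (0\<^sub>m m 1) (mat m m (\<lambda>(i,j). if i = j then es ! i else 0)) $$ (i, j)
          = mat (Suc m) (Suc m) (\<lambda>(i,j). if i = j then (e # es) ! i else 0) $$ (i, j)"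
        using i j by (cases i; cases j) auto
    qed auto
    finally show ?thesis .
  qed
  define P where "P = W * E"
  have P: "P \<in> carrier_mat n n" unfolding P_def using W E by auto
  have Pt: "transpose_mat P = transpose_mat E * transpose_mat W"
    unfolding P_def by (rule transpose_mult[OF W E])
  have "transpose_mat P * P = transpose_mat E * (transpose_mat W * W) * E"
    unfolding Pt unfolding P_def using W E by (simp add: assoc_mult_mat[of _ n n _ n _ n])
  also have "\<dots> = 1\<^sub>m n" unfolding WtW using E EtE by simp
  finally have PtP: "transpose_mat P * P = 1\<^sub>m n" .
  have "transpose_mat P * A * P = transpose_mat E * A' * E"
    unfolding Pt unfolding P_def A'_def using W E A by (simp add: assoc_mult_mat[of _ n n _ n _ n])
  also have "\<dots> = mat n n (\<lambda>(i,j). if i = j then (e # es) ! i else 0)" by (rule EtA'E)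
  finally show ?case using P PtP by blast
qed




lemma ordered_eig_spectral:
  fixes A :: "real mat"
  assumes A: "A \<in> carrier_mat n n" and sym: "transpose_mat A = A" and oe: "ordered_eigenvalues A lam"
  shows "\<exists>P \<in> carrier_mat n n. \<forall>c \<in> carrier_vec n.
            (P *\<^sub>v c) \<bullet> (A *\<^sub>v (P *\<^sub>v c)) = (\<Sum>i<n. lam i * (c $ i)^2) \<and>
            (P *\<^sub>v c) \<bullet> (P *\<^sub>v c) = (\<Sum>i<n. (c $ i)^2)"
proof -
  have "char_poly A = (\<Prod>k<n. [:- lam k, 1:])" using oe A unfolding ordered_eigenvalues_def by simp
  also have "\<dots> = (\<Prod>e\<leftarrow>map lam [0..<n]. [:- e, 1:])"
    by (simp add: prod.distinct_set_conv_list[symmetric] atLeast0LessThan comp_def)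
  finally have cp: "char_poly A = (\<Prod>e\<leftarrow>map lam [0..<n]. [:- e, 1:])" .
  from spectral[OF A sym cp] obtain P where P: "P \<in> carrier_mat n n"
    and PtP: "transpose_mat P * P = 1\<^sub>m n"
    and D: "transpose_mat P * A * P = mat n n (\<lambda>(i,j). if i = j then map lam [0..<n] ! i else 0)" by blast
  show ?thesis
  proof (intro bexI[OF _ P] ballI conjI)
    fix c :: "real vec" assume c: "c \<in> carrier_vec n"
    have Pc: "P *\<^sub>v c \<in> carrier_vec n" using P c by simp
    have APc: "A *\<^sub>v (P *\<^sub>v c) \<in> carrier_vec n" using A Pc by simp
    have "(P *\<^sub>v c) \<bullet> (A *\<^sub>v (P *\<^sub>v c)) = (A *\<^sub>v (P *\<^sub>v c)) \<bullet> (P *\<^sub>v c)"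
      by (rule comm_scalar_prod[OF Pc APc])
    also have "\<dots> = (transpose_mat P *\<^sub>v (A *\<^sub>v (P *\<^sub>v c))) \<bullet> c"
      by (rule transpose_vec_mult_scalar[OF P c APc, symmetric])
    also have "transpose_mat P *\<^sub>v (A *\<^sub>v (P *\<^sub>v c)) = (transpose_mat P * A * P) *\<^sub>v c"
      using P A c by (simp add: assoc_mult_mat_vec[of _ n n _ n c])
    also have "\<dots> = vec n (\<lambda>i. lam i * c $ i)"
    proof (rule eq_vecI)
      fix i assume "i < dim_vec (vec n (\<lambda>i. lam i * c $ i))"
      hence i: "i < n" by simp
      have "(mat n n (\<lambda>(i,j). if i = j then map lam [0..<n] ! i else 0) *\<^sub>v c) $ i
          = (\<Sum>j<n. (if i = j then lam i else 0) * c $ j)"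
      proof -
        have li: "map lam [0..<n] ! i = lam i" using i by simp
        have "(mat n n (\<lambda>(i,j). if i = j then map lam [0..<n] ! i else 0) *\<^sub>v c) $ i
          = (\<Sum>j<n. (if i = j then map lam [0..<n] ! i else 0) * c $ j)"
          using i c by (simp add: mult_mat_vec_def scalar_prod_def row_def atLeast0LessThan)
        also have "\<dots> = (\<Sum>j<n. (if i = j then lam i else 0) * c $ j)"
          by (rule sum.cong) (auto simp: li)
        finally show ?thesis .
      qed
      also have "\<dots> = (\<Sum>j<n. if i = j then lam i * c $ j else 0)"
        by (rule sum.cong) auto
      also have "\<dots> = lam i * c $ i"
        using i by (simp add: sum.delta)
      finally show "(transpose_mat P * A * P *\<^sub>v c) $ i = vec n (\<lambda>i. lam i * c $ i) $ i"
        unfolding D using i by simp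
    qed (use P A in simp)
    also have "vec n (\<lambda>i. lam i * c $ i) \<bullet> c = (\<Sum>i<n. lam i * (c $ i)^2)"
      using c by (simp add: scalar_prod_def atLeast0LessThan power2_eq_square mult_ac)
    finally show "(P *\<^sub>v c) \<bullet> (A *\<^sub>v (P *\<^sub>v c)) = (\<Sum>i<n. lam i * (c $ i)^2)" .
    have "(P *\<^sub>v c) \<bullet> (P *\<^sub>v c) = (transpose_mat P *\<^sub>v (P *\<^sub>v c)) \<bullet> c"
      by (rule transpose_vec_mult_scalar[OF P c Pc, symmetric])
    also have "transpose_mat P *\<^sub>v (P *\<^sub>v c) = c"
      using P c PtP by (simp add: assoc_mult_mat_vec[of _ n n _ n c, symmetric])
    also have "c \<bullet> c = (\<Sum>i<n. (c $ i)^2)"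
      using c by (simp add: scalar_prod_def atLeast0LessThan power2_eq_square)
    finally show "(P *\<^sub>v c) \<bullet> (P *\<^sub>v c) = (\<Sum>i<n. (c $ i)^2)" .
  qed
qed



lemma eig_nonneg:
  fixes A :: "real mat"
  assumes A: "A \<in> carrier_mat n n" and sym: "transpose_mat A = A" and oe: "ordered_eigenvalues A lam"
    and psd: "\<forall>v \<in> carrier_vec n. v \<bullet> (A *\<^sub>v v) \<ge> 0" and k: "k < n"
  shows "lam k \<ge> 0"
proof -
  from ordered_eig_spectral[OF A sym oe] obtain P where P: "P \<in> carrier_mat n n"
    and Q: "\<forall>c \<in> carrier_vec n. (P *\<^sub>v c) \<bullet> (A *\<^sub>v (P *\<^sub>v c)) = (\<Sum>i<n. lam i * (c $ i)^2)" by blast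
  have uc: "unit_vec n k \<in> carrier_vec n" by simp
  have "(\<Sum>i<n. lam i * (unit_vec n k $ i)^2) = (\<Sum>i<n. if i = k then lam i else 0)"
    by (rule sum.cong) (auto simp: unit_vec_def)
  also have "\<dots> = lam k" using k by (simp add: sum.delta')
  finally have "(P *\<^sub>v unit_vec n k) \<bullet> (A *\<^sub>v (P *\<^sub>v unit_vec n k)) = lam k" using Q uc by simp
  moreover have "P *\<^sub>v unit_vec n k \<in> carrier_vec n" using P by simp
  ultimately show ?thesis using psd by force
qed

lemma eig_bound:
  fixes A :: "real mat" and g :: "nat \<Rightarrow> real vec"
  assumes A: "A \<in> carrier_mat n n" and sym: "transpose_mat A = A" and oe: "ordered_eigenvalues A lam"
    and k: "k < n" and g: "\<And>a. a < k \<Longrightarrow> g a \<in> carrier_vec n"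
    and U: "\<And>v. v \<in> carrier_vec n \<Longrightarrow> (\<forall>a<k. g a \<bullet> v = 0) \<Longrightarrow> v \<bullet> (A *\<^sub>v v) \<le> t * (v \<bullet> v)"
  shows "lam k \<le> t"
proof -
  from ordered_eig_spectral[OF A sym oe] obtain P where P: "P \<in> carrier_mat n n"
    and Q: "\<forall>c \<in> carrier_vec n. (P *\<^sub>v c) \<bullet> (A *\<^sub>v (P *\<^sub>v c)) = (\<Sum>i<n. lam i * (c $ i)^2) \<and>
            (P *\<^sub>v c) \<bullet> (P *\<^sub>v c) = (\<Sum>i<n. (c $ i)^2)" by blast
  have ord: "\<And>i. i \<le> k \<Longrightarrow> lam k \<le> lam i"
    using oe k A unfolding ordered_eigenvalues_def by auto
  define G where "G = mat\<^sub>r (Suc k) (Suc k) (\<lambda>a. if a = k then 0\<^sub>v (Suc k) else vec (Suc k) (\<lambda>j. g a \<bullet> col P j))"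
  have Gc: "G \<in> carrier_mat (Suc k) (Suc k)" unfolding G_def by simp
  have "det G = 0" unfolding G_def
    by (rule det_row_0) auto
  from this[unfolded det_0_iff_vec_prod_zero_field[OF Gc]] obtain d where
    d: "d \<in> carrier_vec (Suc k)" and d0: "d \<noteq> 0\<^sub>v (Suc k)" and Gd: "G *\<^sub>v d = 0\<^sub>v (Suc k)" by blast
  define c where "c = vec n (\<lambda>j. if j \<le> k then d $ j else 0)"
  have c: "c \<in> carrier_vec n" unfolding c_def by simp
  define v where "v = P *\<^sub>v c"
  have v: "v \<in> carrier_vec n" unfolding v_def using P c by simp
  have cons: "\<forall>a<k. g a \<bullet> v = 0"
  proof (intro allI impI)
    fix a assume a: "a < k"
    have ga: "g a \<in> carrier_vec n" using g[OF a] .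
    have "g a \<bullet> v = (transpose_mat P *\<^sub>v g a) \<bullet> c"
      unfolding v_def by (rule transpose_vec_mult_scalar[OF P c ga, symmetric])
    also have "\<dots> = (\<Sum>j<n. (g a \<bullet> col P j) * c $ j)"
      using P c ga by (auto simp: scalar_prod_def atLeast0LessThan comm_scalar_prod[of "col P _" n "g a"] intro!: sum.cong)
    also have "\<dots> = (\<Sum>j<Suc k. (g a \<bullet> col P j) * c $ j)"
      by (rule sum.mono_neutral_right) (use k in \<open>auto simp: c_def\<close>)
    also have "\<dots> = (\<Sum>j<Suc k. (g a \<bullet> col P j) * d $ j)"
      by (rule sum.cong) (use k in \<open>auto simp: c_def\<close>)
    also have "\<dots> = (G *\<^sub>v d) $ a"
      using a d unfolding G_def by (simp add: scalar_prod_def atLeast0LessThan)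
    also have "\<dots> = 0" using Gd a by simp
    finally show "g a \<bullet> v = 0" .
  qed
  have le: "v \<bullet> (A *\<^sub>v v) \<le> t * (v \<bullet> v)" by (rule U[OF v cons])
  have qv: "v \<bullet> (A *\<^sub>v v) = (\<Sum>i<n. lam i * (c $ i)^2)" and nv: "v \<bullet> v = (\<Sum>i<n. (c $ i)^2)"
    using Q c unfolding v_def by auto
  have "lam k * (v \<bullet> v) = (\<Sum>i<n. lam k * (c $ i)^2)" unfolding nv by (simp add: sum_distrib_left)
  also have "\<dots> \<le> (\<Sum>i<n. lam i * (c $ i)^2)"
  proof (rule sum_mono)
    fix i assume i: "i \<in> {..<n}"
    show "lam k * (c $ i)^2 \<le> lam i * (c $ i)^2"
    proof (cases "i \<le> k")
      case True thus ?thesis using ord[OF True] by (intro mult_right_mono) auto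
    next
      case False thus ?thesis using i unfolding c_def by simp
    qed
  qed
  also have "\<dots> \<le> t * (v \<bullet> v)" using le qv by simp
  finally have ineq: "lam k * (v \<bullet> v) \<le> t * (v \<bullet> v)" .
  have pos: "v \<bullet> v > 0"
  proof -
    obtain j where j: "j < Suc k" "d $ j \<noteq> 0"
      using d d0 by (metis carrier_vecD eq_vecI index_zero_vec(1) index_zero_vec(2))
    have cj: "c $ j = d $ j" using j k unfolding c_def by simp
    have "(c $ j)^2 \<le> (\<Sum>i<n. (c $ i)^2)"
      by (rule member_le_sum) (use j k in auto)
    moreover have "(c $ j)^2 > 0" using cj j by simp
    ultimately show ?thesis unfolding nv by linarith
  qed
  show ?thesis using ineq pos by simp
qed




lemma gauss2: "(\<Sum>i<n. i) * 2 = n * (n - 1::nat)"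
proof (induct n)
  case 0 show ?case by simp
next
  case (Suc n) thus ?case by (cases n) (simp_all add: algebra_simps)
qed

lemma det_scale:
  fixes M :: "real mat"
  assumes M: "M \<in> carrier_mat n n" and "e \<noteq> 0"
  shows "det M = e ^ (n * (n - 1)) * det (mat n n (\<lambda>(p,q). M $$ (p,q) / e^(p+q)))"
proof -
  define N where "N = mat n n (\<lambda>(p,q). M $$ (p,q) / e^(p+q))"
  have N: "N \<in> carrier_mat n n" unfolding N_def by simp
  have Mij: "M $$ (i, j) = e^i * e^j * N $$ (i, j)" if "i < n" "j < n" for i j
    using that \<open>e \<noteq> 0\<close> unfolding N_def by (simp add: power_add)
  have "det M = (\<Sum>p \<in> {p. p permutes {0..<n}}. signof p * (\<Prod>i = 0..<n. M $$ (i, p i)))"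
    by (rule det_def'[OF M])
  also have "\<dots> = (\<Sum>p \<in> {p. p permutes {0..<n}}. e ^ (n * (n - 1)) * (signof p * (\<Prod>i = 0..<n. N $$ (i, p i))))"
  proof (rule sum.cong[OF refl])
    fix p assume "p \<in> {p. p permutes {0..<n}}"
    hence p: "p permutes {0..<n}" by simp
    have pi: "i < n \<Longrightarrow> p i < n" for i using permutes_in_image[OF p, of i] by simp
    have "(\<Prod>i = 0..<n. M $$ (i, p i)) = (\<Prod>i = 0..<n. e^i * e^(p i) * N $$ (i, p i))"
      by (rule prod.cong) (auto simp: Mij pi)
    also have "\<dots> = (\<Prod>i = 0..<n. e^i) * (\<Prod>i = 0..<n. e^(p i)) * (\<Prod>i = 0..<n. N $$ (i, p i))"
      by (simp add: prod.distrib)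
    also have "(\<Prod>i = 0..<n. e^(p i)) = (\<Prod>i = 0..<n. e^i)"
      using prod.permute[OF p, of "\<lambda>i. e^i"] by (simp add: comp_def)
    also have "(\<Prod>i = 0..<n. e^i) = e ^ (\<Sum>i = 0..<n. i)" by (simp add: power_sum)
    also have "e ^ (\<Sum>i = 0..<n. i) * e ^ (\<Sum>i = 0..<n. i) = e ^ (n * (n - 1))"
      using gauss2[of n] by (simp add: atLeast0LessThan power_add[symmetric] mult_2_right[symmetric] mult.commute)
    finally show "signof p * (\<Prod>i = 0..<n. M $$ (i, p i)) = e ^ (n * (n - 1)) * (signof p * (\<Prod>i = 0..<n. N $$ (i, p i)))"
      by simp
  qed
  also have "\<dots> = e ^ (n * (n - 1)) * det N"
    by (simp add: det_def'[OF N] sum_distrib_left)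
  finally show ?thesis unfolding N_def .
qed

lemma prod_diff:
  fixes a b :: "nat \<Rightarrow> real" and \<beta> \<delta> :: real
  assumes "finite I" "\<And>i. i \<in> I \<Longrightarrow> \<bar>a i\<bar> \<le> \<beta>" "\<And>i. i \<in> I \<Longrightarrow> \<bar>b i - a i\<bar> \<le> \<delta>" "\<delta> \<le> 1" "\<beta> \<ge> 0"
  shows "\<bar>prod b I - prod a I\<bar> \<le> card I * (\<beta>+1)^card I * \<delta>"
  using assms
proof (induct I rule: finite_induct)
  case empty thus ?case by simp
next
  case (insert j I)
  have IH: "\<bar>prod b I - prod a I\<bar> \<le> card I * (\<beta>+1)^card I * \<delta>" using insert by auto
  have aj: "\<bar>a j\<bar> \<le> \<beta>" and bj: "\<bar>b j - a j\<bar> \<le> \<delta>" using insert by auto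
  have d0: "\<delta> \<ge> 0" using bj by linarith
  have b0: "\<beta> \<ge> 0" using insert by simp
  have bjb: "\<bar>b j\<bar> \<le> \<beta> + 1" using aj bj insert(6) by linarith
  have pa: "\<bar>prod a I\<bar> \<le> (\<beta>+1)^card I"
  proof -
    have "\<bar>prod a I\<bar> = (\<Prod>i\<in>I. \<bar>a i\<bar>)" by (simp add: abs_prod)
    also have "\<dots> \<le> (\<Prod>i\<in>I. \<beta> + 1)" using insert by (intro prod_mono) force
    finally show ?thesis by simp
  qed
  have "prod b (insert j I) - prod a (insert j I) = b j * (prod b I - prod a I) + (b j - a j) * prod a I"
    using insert by (simp add: algebra_simps)
  hence "\<bar>prod b (insert j I) - prod a (insert j I)\<bar> \<le> \<bar>b j\<bar> * \<bar>prod b I - prod a I\<bar> + \<bar>b j - a j\<bar> * \<bar>prod a I\<bar>"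
    by (metis abs_mult abs_triangle_ineq)
  also have "\<dots> \<le> (\<beta>+1) * (card I * (\<beta>+1)^card I * \<delta>) + \<delta> * (\<beta>+1)^card I"
    using b0 d0 by (intro add_mono mult_mono IH bjb bj pa) auto
  also have "\<dots> \<le> (\<beta>+1) * (card I * (\<beta>+1)^card I * \<delta>) + \<delta> * ((\<beta>+1) * (\<beta>+1)^card I)"
    using b0 d0 by (intro add_left_mono mult_left_mono) auto
  also have "\<dots> = (card I + 1) * ((\<beta>+1) * (\<beta>+1)^card I) * \<delta>"
    by (simp add: algebra_simps)
  also have "\<dots> = (card I + 1) * (\<beta>+1)^(card I + 1) * \<delta>"
    by simp
  also have "\<dots> \<le> card (insert j I) * (\<beta>+1)^card (insert j I) * \<delta>"
    using insert by simp
  finally show ?case .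
qed


lemma det_diff:
  fixes A B :: "real mat" and \<beta> \<delta> :: real
  assumes A: "A \<in> carrier_mat n n" and B: "B \<in> carrier_mat n n"
    and a: "\<And>i j. i < n \<Longrightarrow> j < n \<Longrightarrow> \<bar>A $$ (i,j)\<bar> \<le> \<beta>"
    and b: "\<And>i j. i < n \<Longrightarrow> j < n \<Longrightarrow> \<bar>B $$ (i,j) - A $$ (i,j)\<bar> \<le> \<delta>"
    and d1: "\<delta> \<le> 1" and b0: "\<beta> \<ge> 0"
  shows "\<bar>det B - det A\<bar> \<le> card {p. p permutes {0..<n}} * (n * (\<beta>+1)^n * \<delta>)"
proof -
  have eq: "det B - det A = (\<Sum>p \<in> {p. p permutes {0..<n}}. signof p * ((\<Prod>i = 0..<n. B $$ (i, p i)) - (\<Prod>i = 0..<n. A $$ (i, p i))))"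
    unfolding det_def'[OF A] det_def'[OF B] by (simp only: sum_subtractf right_diff_distrib)
  have "\<bar>det B - det A\<bar> \<le> (\<Sum>p \<in> {p. p permutes {0..<n}}. \<bar>signof p * ((\<Prod>i = 0..<n. B $$ (i, p i)) - (\<Prod>i = 0..<n. A $$ (i, p i)))\<bar>)"
    unfolding eq by (rule sum_abs)
  also have "\<dots> \<le> (\<Sum>p \<in> {p. p permutes {0..<n}}. n * (\<beta>+1)^n * \<delta>)"
  proof (rule sum_mono)
    fix p assume "p \<in> {p. p permutes {0..<n}}"
    hence p: "p permutes {0..<n}" by simp
    have pi: "i < n \<Longrightarrow> p i < n" for i using permutes_in_image[OF p, of i] by simp
    have s: "\<bar>signof p :: real\<bar> = 1" by (simp add: sign_def)
    have "\<bar>(\<Prod>i = 0..<n. B $$ (i, p i)) - (\<Prod>i = 0..<n. A $$ (i, p i))\<bar> \<le> card {0..<n} * (\<beta>+1)^card {0..<n} * \<delta>"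
      by (rule prod_diff) (auto simp: pi a b d1 b0)
    thus "\<bar>signof p * ((\<Prod>i = 0..<n. B $$ (i, p i)) - (\<Prod>i = 0..<n. A $$ (i, p i)))\<bar> \<le> n * (\<beta>+1)^n * \<delta>"
      by (simp add: abs_mult s)
  qed
  also have "\<dots> = card {p. p permutes {0..<n}} * (n * (\<beta>+1)^n * \<delta>)" by simp
  finally show ?thesis .
qed


lemma vander_inj:
  fixes x u :: "nat \<Rightarrow> real"
  assumes inj: "inj_on x {..<n}" and mom: "\<And>c. c < n \<Longrightarrow> (\<Sum>i<n. u i * x i ^ c) = 0" and j: "j < n"
  shows "u j = 0"
proof -
  define p where "p = (\<Prod>i\<in>{..<n}-{j}. [:- x i, 1:])"
  have degp: "degree p \<le> n - 1"
  proof -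
    have "degree p \<le> (\<Sum>i\<in>{..<n}-{j}. degree [:- x i, 1:])" unfolding p_def using degree_prod_sum_le[of "{..<n}-{j}" "\<lambda>i. [:-x i,1:]"] by (simp add: comp_def)
    also have "\<dots> = card ({..<n}-{j})" by simp
    also have "\<dots> = n - 1" using j by simp
    finally show ?thesis .
  qed
  have pz: "poly p z = (\<Sum>c<n. coeff p c * z ^ c)" for z
  proof -
    have "poly p z = (\<Sum>c\<le>degree p. coeff p c * z ^ c)" by (simp add: poly_altdef)
    also have "\<dots> = (\<Sum>c<n. coeff p c * z ^ c)"
      by (rule sum.mono_neutral_left) (use degp j in \<open>auto simp: coeff_eq_0\<close>)
    finally show ?thesis .
  qed
  have "(\<Sum>i<n. u i * poly p (x i)) = (\<Sum>c<n. coeff p c * (\<Sum>i<n. u i * x i ^ c))"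
  proof -
    have "(\<Sum>i<n. u i * poly p (x i)) = (\<Sum>i<n. \<Sum>c<n. coeff p c * (u i * x i ^ c))"
      unfolding pz by (simp add: sum_distrib_left mult_ac)
    also have "\<dots> = (\<Sum>c<n. \<Sum>i<n. coeff p c * (u i * x i ^ c))" by (rule sum.swap)
    also have "\<dots> = (\<Sum>c<n. coeff p c * (\<Sum>i<n. u i * x i ^ c))" by (simp add: sum_distrib_left)
    finally show ?thesis .
  qed
  also have "\<dots> = 0" by (simp add: mom)
  finally have s0: "(\<Sum>i<n. u i * poly p (x i)) = 0" .
  have pxi: "poly p (x i) = 0" if "i < n" "i \<noteq> j" for i
    unfolding p_def poly_prod using that by (intro prod_zero) auto
  have "(\<Sum>i<n. u i * poly p (x i)) = u j * poly p (x j) + (\<Sum>i\<in>{..<n}-{j}. u i * poly p (x i))"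
    by (rule sum.remove) (use j in auto)
  also have "(\<Sum>i\<in>{..<n}-{j}. u i * poly p (x i)) = 0"
    by (rule sum.neutral) (use pxi in auto)
  finally have "u j * poly p (x j) = 0" using s0 by simp
  moreover have "poly p (x j) \<noteq> 0"
  proof -
    have "poly p (x j) = (\<Prod>i\<in>{..<n}-{j}. x j - x i)" unfolding p_def poly_prod by simp
    also have "\<dots> \<noteq> 0"
    proof
      assume "(\<Prod>i\<in>{..<n}-{j}. x j - x i) = 0"
      then obtain i where i: "i \<in> {..<n}-{j}" "x j - x i = 0" by (auto simp: prod_zero_iff)
      hence "x i = x j" by simp
      with inj i j show False by (auto dest: inj_onD)
    qed
    finally show ?thesis .
  qed
  ultimately show ?thesis by simp
qed




lemma quad_bound:
  fixes K :: "real \<Rightarrow> real \<Rightarrow> real" and u x :: "nat \<Rightarrow> real"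
  assumes Cll: "Cll n a K" and a: "a > 0"
    and B: "\<forall>i\<le>n. \<forall>j\<le>n. \<forall>s t. \<bar>s\<bar> \<le> a/2 \<longrightarrow> \<bar>t\<bar> \<le> a/2 \<longrightarrow> \<bar>pderiv_xy K i j s t\<bar> \<le> B"
    and k: "k < n" and e0: "e \<ge> 0" and ex: "\<And>i. i < n \<Longrightarrow> \<bar>e * x i\<bar> < a/2"
    and mom: "\<And>c. c < k \<Longrightarrow> (\<Sum>i<n. u i * x i ^ c) = 0"
  shows "\<bar>\<Sum>j<n. u j * (\<Sum>i<n. u i * K (e * x i) (e * x j))\<bar>
           \<le> e^(2*k) * (\<Sum>i<n. \<bar>u i\<bar> * \<bar>x i\<bar>^k)^2 * B / (fact k)^2"
proof -
  define S where "S = (\<Sum>i<n. \<bar>u i\<bar> * \<bar>x i\<bar>^k)"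
  have exa: "\<And>i. i < n \<Longrightarrow> \<bar>e * x i\<bar> < a" using ex a by fastforce
  define h where "h c t = (\<Sum>i<n. u i * pderiv_xy K 0 c (e * x i) t)" for c t
  have hD: "(h c has_real_derivative h (Suc c) t) (at t)" if "c < k" "\<bar>t\<bar> < a/2" for c t
    unfolding h_def
    by (intro DERIV_sum DERIV_cmult Cll_Dy[OF Cll]) (use exa that a k in auto)
  have hk: "\<bar>h k t\<bar> \<le> e^k * S * B / fact k" if t: "\<bar>t\<bar> < a/2" for t
  proof -
    have "\<bar>(\<Sum>i<n. u i * pderiv_xy K 0 k (e * x i) t) - (\<Sum>c<k. pderiv_xy K c k 0 t / fact c * e^c * (\<Sum>i<n. u i * x i ^ c))\<bar>
       \<le> \<bar>e\<bar>^k * (\<Sum>i<n. \<bar>u i\<bar> * \<bar>x i\<bar>^k) * B / fact k"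
      by (rule moment_taylor[where diff="\<lambda>c s. pderiv_xy K c k s t" and r="a/2"])
         (use ex t k B in \<open>auto intro!: Cll_Dx[OF Cll]\<close>)
    moreover have "(\<Sum>c<k. pderiv_xy K c k 0 t / fact c * e^c * (\<Sum>i<n. u i * x i ^ c)) = 0"
      by (intro sum.neutral) (use mom in auto)
    ultimately show ?thesis using e0 unfolding h_def S_def by simp
  qed
  have "\<bar>(\<Sum>j<n. u j * h 0 (e * x j)) - (\<Sum>c<k. h c 0 / fact c * e^c * (\<Sum>j<n. u j * x j ^ c))\<bar>
     \<le> \<bar>e\<bar>^k * (\<Sum>j<n. \<bar>u j\<bar> * \<bar>x j\<bar>^k) * (e^k * S * B / fact k) / fact k"
    by (rule moment_taylor[where diff="h" and r="a/2"]) (use ex hD hk in auto)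
  moreover have "(\<Sum>c<k. h c 0 / fact c * e^c * (\<Sum>j<n. u j * x j ^ c)) = 0"
    by (intro sum.neutral) (use mom in auto)
  moreover have "h 0 (e * x j) = (\<Sum>i<n. u i * K (e * x i) (e * x j))" for j
    unfolding h_def by simp
  ultimately have "\<bar>\<Sum>j<n. u j * (\<Sum>i<n. u i * K (e * x i) (e * x j))\<bar> \<le> e^k * S * (e^k * S * B / fact k) / fact k"
    using e0 unfolding S_def by simp
  also have "\<dots> = e^(2*k) * S^2 * B / (fact k)^2"
    by (simp add: power2_eq_square mult_2 power_add)
  finally show ?thesis unfolding S_def .
qed

lemma S_bound:
  fixes v :: "real vec" and x :: "nat \<Rightarrow> real"
  assumes v: "v \<in> carrier_vec n"
  shows "(\<Sum>i<n. \<bar>v $ i\<bar> * \<bar>x i\<bar>^k)^2 \<le> (\<Sum>i<n. \<bar>x i\<bar>^k)^2 * (v \<bullet> v)"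
proof -
  have vv: "v \<bullet> v = (\<Sum>i<n. (v $ i)^2)" using v by (simp add: scalar_prod_def atLeast0LessThan power2_eq_square)
  have vi: "\<bar>v $ i\<bar> \<le> sqrt (v \<bullet> v)" if i: "i < n" for i
  proof -
    have "(v $ i)^2 \<le> v \<bullet> v" unfolding vv by (rule member_le_sum) (use i in auto)
    hence "sqrt ((v $ i)^2) \<le> sqrt (v \<bullet> v)" by (rule real_sqrt_le_mono)
    thus ?thesis by simp
  qed
  have "(\<Sum>i<n. \<bar>v $ i\<bar> * \<bar>x i\<bar>^k) \<le> (\<Sum>i<n. sqrt (v \<bullet> v) * \<bar>x i\<bar>^k)"
    by (intro sum_mono mult_right_mono vi) auto
  also have "\<dots> = sqrt (v \<bullet> v) * (\<Sum>i<n. \<bar>x i\<bar>^k)" by (simp add: sum_distrib_left)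
  finally have le: "(\<Sum>i<n. \<bar>v $ i\<bar> * \<bar>x i\<bar>^k) \<le> sqrt (v \<bullet> v) * (\<Sum>i<n. \<bar>x i\<bar>^k)" .
  have nn: "0 \<le> (\<Sum>i<n. \<bar>v $ i\<bar> * \<bar>x i\<bar>^k)" by (intro sum_nonneg) auto
  have vv0: "v \<bullet> v \<ge> 0" unfolding vv by (intro sum_nonneg) auto
  have "(\<Sum>i<n. \<bar>v $ i\<bar> * \<bar>x i\<bar>^k)^2 \<le> (sqrt (v \<bullet> v) * (\<Sum>i<n. \<bar>x i\<bar>^k))^2"
    by (rule power_mono[OF le nn])
  also have "\<dots> = (\<Sum>i<n. \<bar>x i\<bar>^k)^2 * (v \<bullet> v)" using vv0 by (simp add: power_mult_distrib)
  finally show ?thesis .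
qed



lemma kernel_mat_carrier[simp]: "kernel_mat K x n e \<in> carrier_mat n n"
  unfolding kernel_mat_def by simp

lemma small_eps:
  fixes x :: "nat \<Rightarrow> real"
  assumes a: "a > 0" and e0: "e0 > 0"
  shows "\<forall>\<^sub>F e in at_right 0. 0 < e \<and> e \<le> e0 \<and> e \<le> 1 \<and> (\<forall>i<n. \<bar>e * x i\<bar> < a/2)"
proof -
  define X where "X = (\<Sum>i<n. \<bar>x i\<bar>)"
  have X0: "X \<ge> 0" unfolding X_def by (intro sum_nonneg) auto
  define b where "b = min (min e0 1) (a/2 / (1 + X))"
  have b: "b > 0" unfolding b_def using a e0 X0 by auto
  have "\<forall>e>0. e < b \<longrightarrow> 0 < e \<and> e \<le> e0 \<and> e \<le> 1 \<and> (\<forall>i<n. \<bar>e * x i\<bar> < a/2)"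
  proof (intro allI impI)
    fix e :: real assume e1: "0 < e" and e2: "e < b"
    have ab: "\<forall>i<n. \<bar>e * x i\<bar> < a/2"
    proof (intro allI impI)
      fix i assume i: "i < n"
      have xi: "\<bar>x i\<bar> \<le> X" unfolding X_def by (rule member_le_sum) (use i in auto)
      have "e < a/2 / (1 + X)" using e2 unfolding b_def by auto
      hence "e * (1 + X) < a/2" using X0 by (simp add: field_simps)
      moreover have "\<bar>e * x i\<bar> \<le> e * X" using e1 xi by (simp add: abs_mult mult_left_mono)
      ultimately show "\<bar>e * x i\<bar> < a/2" using e1 X0 by (simp add: algebra_simps)
    qed
    show "0 < e \<and> e \<le> e0 \<and> e \<le> 1 \<and> (\<forall>i<n. \<bar>e * x i\<bar> < a/2)"
      using e1 e2 ab unfolding b_def by auto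
  qed
  thus ?thesis unfolding eventually_at_right_field using b by blast
qed

lemma part2:
  fixes K :: "real \<Rightarrow> real \<Rightarrow> real" and x :: "nat \<Rightarrow> real" and lam :: "real \<Rightarrow> nat \<Rightarrow> real"
  assumes Cll: "Cll n a K" and a: "a > 0" and k: "k < n" and e0: "\<epsilon>0 > 0"
    and H: "\<forall>\<epsilon>\<in>{0..\<epsilon>0}. psd_mat (kernel_mat K x n \<epsilon>) \<and> ordered_eigenvalues (kernel_mat K x n \<epsilon>) (lam \<epsilon>)"
  shows "(\<lambda>\<epsilon>. lam \<epsilon> k) \<in> O[at_right 0](\<lambda>\<epsilon>. \<epsilon> ^ (2 * k))"
proof -
  obtain B where B: "\<forall>i\<le>n. \<forall>j\<le>n. \<forall>s t. \<bar>s\<bar> \<le> a/2 \<longrightarrow> \<bar>t\<bar> \<le> a/2 \<longrightarrow> \<bar>pderiv_xy K i j s t\<bar> \<le> B"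
    using Cll_bound[OF Cll a] by blast
  have B0: "B \<ge> 0" using B[rule_format, of 0 0 0 0] a by auto
  define X where "X = (\<Sum>i<n. \<bar>x i\<bar>^k)"
  define C where "C = X^2 * B / (fact k)^2"
  have C0: "C \<ge> 0" unfolding C_def using B0 by simp
  show ?thesis
  proof (rule bigoI[where c=C])
    show "\<forall>\<^sub>F e in at_right 0. norm (lam e k) \<le> C * norm (e ^ (2 * k))"
      using small_eps[OF a e0, where x=x and n=n]
    proof eventually_elim
      case (elim e)
      hence e: "0 < e" "e \<le> \<epsilon>0" and ex: "\<And>i. i < n \<Longrightarrow> \<bar>e * x i\<bar> < a/2" by auto
      define A where "A = kernel_mat K x n e"
      have A: "A \<in> carrier_mat n n" unfolding A_def by simp
      have He: "psd_mat A" "ordered_eigenvalues A (lam e)" using H e unfolding A_def by auto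
      have dA: "dim_row A = n" using A by simp
      have sym: "transpose_mat A = A" and psd: "\<forall>v \<in> carrier_vec n. v \<bullet> (A *\<^sub>v v) \<ge> 0"
        using He(1) dA unfolding psd_mat_def by auto
      have nonneg: "lam e k \<ge> 0" by (rule eig_nonneg[OF A sym He(2) psd k])
      have upper: "lam e k \<le> C * e^(2*k)"
      proof (rule eig_bound[OF A sym He(2) k, where g="\<lambda>c. vec n (\<lambda>i. x i ^ c)"])
        show "\<And>c. c < k \<Longrightarrow> vec n (\<lambda>i. x i ^ c) \<in> carrier_vec n" by simp
        fix v :: "real vec" assume v: "v \<in> carrier_vec n" and cons: "\<forall>c<k. vec n (\<lambda>i. x i ^ c) \<bullet> v = 0"
        have mom: "\<And>c. c < k \<Longrightarrow> (\<Sum>i<n. v $ i * x i ^ c) = 0"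
        proof -
          fix c assume c: "c < k"
          have "vec n (\<lambda>i. x i ^ c) \<bullet> v = (\<Sum>i<n. v $ i * x i ^ c)"
            using v by (simp add: scalar_prod_def atLeast0LessThan mult.commute)
          thus "(\<Sum>i<n. v $ i * x i ^ c) = 0" using cons c by simp
        qed
        have "v \<bullet> (A *\<^sub>v v) = (\<Sum>i<n. v $ i * (\<Sum>j<n. K (e * x i) (e * x j) * v $ j))"
          using v A unfolding A_def kernel_mat_def
          by (simp add: scalar_prod_def atLeast0LessThan mult_mat_vec_def row_def)
        also have "\<dots> = (\<Sum>j<n. v $ j * (\<Sum>i<n. v $ i * K (e * x i) (e * x j)))"
        proof -
          have "(\<Sum>i<n. v $ i * (\<Sum>j<n. K (e * x i) (e * x j) * v $ j)) = (\<Sum>i<n. \<Sum>j<n. v $ j * (v $ i * K (e * x i) (e * x j)))"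
            by (simp add: sum_distrib_left mult_ac)
          also have "\<dots> = (\<Sum>j<n. \<Sum>i<n. v $ j * (v $ i * K (e * x i) (e * x j)))" by (rule sum.swap)
          also have "\<dots> = (\<Sum>j<n. v $ j * (\<Sum>i<n. v $ i * K (e * x i) (e * x j)))" by (simp add: sum_distrib_left)
          finally show ?thesis .
        qed
        also have "\<dots> \<le> \<bar>\<dots>\<bar>" by simp
        also have "\<dots> \<le> e^(2*k) * (\<Sum>i<n. \<bar>v $ i\<bar> * \<bar>x i\<bar>^k)^2 * B / (fact k)^2"
          by (rule quad_bound[OF Cll a B k _ ex mom]) (use e in auto)
        also have "\<dots> \<le> e^(2*k) * (X^2 * (v \<bullet> v)) * B / (fact k)^2"
          using S_bound[OF v, of x k] e B0 unfolding X_def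
          by (intro divide_right_mono mult_right_mono mult_left_mono) auto
        also have "\<dots> = C * e^(2*k) * (v \<bullet> v)" unfolding C_def by simp
        finally show "v \<bullet> (A *\<^sub>v v) \<le> C * e^(2*k) * (v \<bullet> v)" .
      qed
      show "norm (lam e k) \<le> C * norm (e ^ (2 * k))" using nonneg upper e by simp
    qed
  qed
qed




lemma vander_carrier: "n \<ge> 1 \<Longrightarrow> vandermonde x n (n - 1) \<in> carrier_mat n n"
  unfolding vandermonde_def by simp

lemma M_entry:
  assumes T: "T \<in> carrier_mat n n" and pq: "p < n" "q < n"
  shows "(T * kernel_mat K x n e * transpose_mat T) $$ (p,q) = (\<Sum>j<n. T $$ (q,j) * (\<Sum>i<n. T $$ (p,i) * K (e * x i) (e * x j)))"
proof -
  have "(T * kernel_mat K x n e * transpose_mat T) $$ (p,q) = (\<Sum>j<n. (\<Sum>i<n. T $$ (p,i) * K (e * x i) (e * x j)) * T $$ (q,j))"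
    using T pq by (simp add: scalar_prod_def atLeast0LessThan kernel_mat_def row_def col_def)
  thus ?thesis by (simp add: mult.commute)
qed

lemma vander_det_nz:
  assumes inj: "inj_on x {..<n}" and n: "n \<ge> 1"
  shows "det (vandermonde x n (n - 1)) \<noteq> 0"
proof
  let ?V = "vandermonde x n (n - 1)"
  have V: "?V \<in> carrier_mat n n" by (rule vander_carrier[OF n])
  assume "det ?V = 0"
  hence "det (transpose_mat ?V) = 0" using det_transpose[OF V] by simp
  have VT: "transpose_mat ?V \<in> carrier_mat n n" using V by simp
  from \<open>det (transpose_mat ?V) = 0\<close>[unfolded det_0_iff_vec_prod_zero_field[OF VT]] obtain u where
    u: "u \<in> carrier_vec n" and u0: "u \<noteq> 0\<^sub>v n" and Vu: "transpose_mat ?V *\<^sub>v u = 0\<^sub>v n" by auto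
  have mom: "(\<Sum>i<n. u $ i * x i ^ c) = 0" if c: "c < n" for c
  proof -
    have "(transpose_mat ?V *\<^sub>v u) $ c = (\<Sum>i<n. x i ^ c * u $ i)"
      using c u n by (simp add: vandermonde_def scalar_prod_def atLeast0LessThan col_def)
    thus ?thesis using Vu c by (simp add: mult.commute)
  qed
  have "u = 0\<^sub>v n"
    by (rule eq_vecI) (use u vander_inj[OF inj mom] in auto)
  thus False using u0 by simp
qed

lemma part1_noninj:
  assumes n: "n \<ge> 1" and ni: "\<not> inj_on x {..<n}"
  shows "\<exists>R. R \<in> O[at_right 0](\<lambda>\<epsilon>. \<epsilon>) \<and>
            (\<forall>\<^sub>F \<epsilon> in at_right 0. det (kernel_mat K x n \<epsilon>) =
               \<epsilon> ^ (n * (n - 1)) *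
               ((det (vandermonde x n (n - 1)))\<^sup>2 * det (wronskian K (n - 1)) + R \<epsilon>))"
proof -
  from ni obtain i j where ij: "i < n" "j < n" "i \<noteq> j" "x i = x j"
    unfolding inj_on_def by auto
  have dV: "det (vandermonde x n (n - 1)) = 0"
    by (rule det_identical_rows[OF vander_carrier[OF n] ij(3) ij(1) ij(2)])
       (rule eq_vecI, use ij n in \<open>auto simp: vandermonde_def\<close>)
  have dK: "det (kernel_mat K x n e) = 0" for e
    by (rule det_identical_rows[OF kernel_mat_carrier ij(3) ij(1) ij(2)])
       (rule eq_vecI, use ij in \<open>auto simp: kernel_mat_def\<close>)
  have "(\<lambda>_. 0::real) \<in> O[at_right 0](\<lambda>\<epsilon>. \<epsilon>)" by (rule bigoI[where c=0]) simp
  moreover have "\<forall>\<^sub>F \<epsilon> in at_right 0. det (kernel_mat K x n \<epsilon>) =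
               \<epsilon> ^ (n * (n - 1)) * ((det (vandermonde x n (n - 1)))\<^sup>2 * det (wronskian K (n - 1)) + 0)"
    unfolding dV dK by simp
  ultimately show ?thesis by blast
qed



lemma part1_inj:
  fixes K :: "real \<Rightarrow> real \<Rightarrow> real" and x :: "nat \<Rightarrow> real"
  assumes Cll: "Cll n a K" and a: "a > 0" and n: "n \<ge> 1" and inj: "inj_on x {..<n}"
  shows "\<exists>R. R \<in> O[at_right 0](\<lambda>\<epsilon>. \<epsilon>) \<and>
            (\<forall>\<^sub>F \<epsilon> in at_right 0. det (kernel_mat K x n \<epsilon>) =
               \<epsilon> ^ (n * (n - 1)) *
               ((det (vandermonde x n (n - 1)))\<^sup>2 * det (wronskian K (n - 1)) + R \<epsilon>))"
proof -
  define V where "V = vandermonde x n (n - 1)"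
  have Vc: "V \<in> carrier_mat n n" unfolding V_def by (rule vander_carrier[OF n])
  have dV: "det V \<noteq> 0" unfolding V_def by (rule vander_det_nz[OF inj n])
  from det_non_zero_imp_unit[OF Vc dV, of "()"]
  obtain T where Tc: "T \<in> carrier_mat n n" and TV: "T * V = 1\<^sub>m n"
    by (auto simp: Units_def ring_mat_def)
  have delta: "(\<Sum>j<n. T $$ (b,j) * x j ^ c) = (if c = b then 1 else 0)" if bc: "b < n" "c < n" for b c
  proof -
    have "(T * V) $$ (b, c) = (\<Sum>j<n. T $$ (b,j) * x j ^ c)"
      using Tc Vc bc n unfolding V_def by (simp add: vandermonde_def scalar_prod_def atLeast0LessThan row_def col_def)
    thus ?thesis using TV bc by auto
  qed
  obtain B where B: "\<forall>i\<le>n. \<forall>j\<le>n. \<forall>s t. \<bar>s\<bar> \<le> a/2 \<longrightarrow> \<bar>t\<bar> \<le> a/2 \<longrightarrow> \<bar>pderiv_xy K i j s t\<bar> \<le> B"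
    using Cll_bound[OF Cll a] by blast
  define cond where "cond \<epsilon> \<longleftrightarrow> 0 \<le> \<epsilon> \<and> \<epsilon> \<le> 1 \<and> (\<forall>i<n. \<bar>\<epsilon> * x i\<bar> < a/2)" for \<epsilon> :: real
  define Mf where "Mf \<epsilon> = T * kernel_mat K x n \<epsilon> * transpose_mat T" for \<epsilon>
  define W where "W = wronskian K (n - 1)"
  have Wc: "W \<in> carrier_mat n n" unfolding W_def wronskian_def using n by simp
  have Wpq: "W $$ (p,q) = pderiv_xy K p q 0 0 / (fact p * fact q)" if "p < n" "q < n" for p q
    unfolding W_def wronskian_def using that n by simp
  have "\<forall>pq\<in>{..<n}\<times>{..<n}. \<exists>C. \<forall>\<epsilon>. cond \<epsilon> \<longrightarrow>
      \<bar>Mf \<epsilon> $$ pq - \<epsilon>^(fst pq + snd pq) * W $$ pq\<bar> \<le> C * \<epsilon>^(fst pq + snd pq + 1)"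
  proof
    fix pq assume "pq \<in> {..<n}\<times>{..<n}"
    then obtain p q where pq: "pq = (p,q)" "p < n" "q < n" by auto
    from entry_est[where T="\<lambda>b j. T $$ (b,j)", OF Cll a B delta pq(2) pq(3)] obtain C where
      C: "\<forall>\<epsilon>. 0 \<le> \<epsilon> \<and> \<epsilon> \<le> 1 \<and> (\<forall>i<n. \<bar>\<epsilon> * x i\<bar> < a/2) \<longrightarrow>
     \<bar>(\<Sum>j<n. T $$ (q,j) * (\<Sum>i<n. T $$ (p,i) * K (\<epsilon> * x i) (\<epsilon> * x j))) - \<epsilon>^(p+q) * (pderiv_xy K p q 0 0 / (fact p * fact q))\<bar>
       \<le> C * \<epsilon>^(p+q+1)" by blast
    show "\<exists>C. \<forall>\<epsilon>. cond \<epsilon> \<longrightarrow> \<bar>Mf \<epsilon> $$ pq - \<epsilon>^(fst pq + snd pq) * W $$ pq\<bar> \<le> C * \<epsilon>^(fst pq + snd pq + 1)"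
      using C unfolding pq(1) cond_def Mf_def by (auto simp: M_entry[OF Tc pq(2) pq(3)] Wpq[OF pq(2) pq(3)])
  qed
  from bchoice[OF this] obtain Cf where Cf: "\<forall>pq\<in>{..<n}\<times>{..<n}. \<forall>\<epsilon>. cond \<epsilon> \<longrightarrow>
      \<bar>Mf \<epsilon> $$ pq - \<epsilon>^(fst pq + snd pq) * W $$ pq\<bar> \<le> Cf pq * \<epsilon>^(fst pq + snd pq + 1)" by blast
  define Cm where "Cm = (\<Sum>pq\<in>{..<n}\<times>{..<n}. \<bar>Cf pq\<bar>)"
  have Cm: "\<bar>Cf (p,q)\<bar> \<le> Cm" if "p < n" "q < n" for p q
    unfolding Cm_def by (rule member_le_sum[where f="\<lambda>pq. \<bar>Cf pq\<bar>"]) (use that in auto)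
  have Cm0: "Cm \<ge> 0" unfolding Cm_def by (intro sum_nonneg) auto
  define \<beta> where "\<beta> = (\<Sum>pq\<in>{..<n}\<times>{..<n}. \<bar>W $$ pq\<bar>)"
  have \<beta>: "\<bar>W $$ (p,q)\<bar> \<le> \<beta>" if "p < n" "q < n" for p q
    unfolding \<beta>_def by (rule member_le_sum[where f="\<lambda>pq. \<bar>W $$ pq\<bar>"]) (use that in auto)
  have \<beta>0: "\<beta> \<ge> 0" unfolding \<beta>_def by (intro sum_nonneg) auto
  define Nf where "Nf \<epsilon> = mat n n (\<lambda>(p,q). Mf \<epsilon> $$ (p,q) / \<epsilon>^(p+q))" for \<epsilon> :: real
  have Nc: "Nf \<epsilon> \<in> carrier_mat n n" for \<epsilon> unfolding Nf_def by simp
  define R where "R \<epsilon> = (det V)^2 * (det (Nf \<epsilon>) - det W)" for \<epsilon>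
  define cP where "cP = real (card {p. p permutes {0..<n}})"
  define Kc where "Kc = (det V)^2 * (cP * (n * (\<beta>+1)^n * Cm))"
  have ev: "\<forall>\<^sub>F e in at_right 0. 0 < e \<and> e \<le> 1 / (Cm + 1) \<and> e \<le> 1 \<and> (\<forall>i<n. \<bar>e * x i\<bar> < a/2)"
    by (rule small_eps[OF a]) (use Cm0 in simp)
  have "R \<in> O[at_right 0](\<lambda>\<epsilon>. \<epsilon>)"
  proof (rule bigoI[where c=Kc])
    show "\<forall>\<^sub>F e in at_right 0. norm (R e) \<le> Kc * norm e"
      using ev
    proof eventually_elim
      case (elim e)
      hence e0: "0 < e" and e1: "e \<le> 1 / (Cm + 1)" and c: "cond e" unfolding cond_def by auto
      have Cme: "Cm * e \<le> 1"
      proof -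
        have "Cm * e \<le> Cm * (1 / (Cm + 1))" using e1 Cm0 by (intro mult_left_mono) auto
        also have "\<dots> \<le> 1" using Cm0 by (simp add: field_simps)
        finally show ?thesis .
      qed
      have ent: "\<bar>Nf e $$ (p,q) - W $$ (p,q)\<bar> \<le> Cm * e" if pq: "p < n" "q < n" for p q
      proof -
        have h: "\<bar>Mf e $$ (p,q) - e^(p+q) * W $$ (p,q)\<bar> \<le> Cf (p,q) * e^(p+q+1)"
          using Cf c pq by fastforce
        have ep: "e^(p+q) > 0" using e0 by simp
        have "Nf e $$ (p,q) - W $$ (p,q) = (Mf e $$ (p,q) - e^(p+q) * W $$ (p,q)) / e^(p+q)"
          unfolding Nf_def using pq ep e0 by (simp add: diff_divide_distrib)
        hence "\<bar>Nf e $$ (p,q) - W $$ (p,q)\<bar> = \<bar>Mf e $$ (p,q) - e^(p+q) * W $$ (p,q)\<bar> / e^(p+q)"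
          using ep by simp
        also have "\<dots> \<le> Cf (p,q) * e^(p+q+1) / e^(p+q)"
          using h ep by (intro divide_right_mono) auto
        also have "\<dots> = Cf (p,q) * e" using ep by (simp add: field_simps)
        also have "\<dots> \<le> Cm * e" using Cm[OF pq] e0 by (intro mult_right_mono) auto
        finally show ?thesis .
      qed
      have "\<bar>det (Nf e) - det W\<bar> \<le> card {p. p permutes {0..<n}} * (n * (\<beta>+1)^n * (Cm * e))"
        by (rule det_diff[OF Wc Nc]) (use \<beta> ent Cme \<beta>0 in auto)
      hence "\<bar>R e\<bar> \<le> (det V)^2 * (card {p. p permutes {0..<n}} * (n * (\<beta>+1)^n * (Cm * e)))"
        unfolding R_def by (simp add: abs_mult mult_left_mono)
      also have "\<dots> = Kc * e" unfolding Kc_def cP_def by (simp add: algebra_simps)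
      finally show "norm (R e) \<le> Kc * norm e" using e0 by simp
    qed
  qed
  moreover have "\<forall>\<^sub>F \<epsilon> in at_right 0. det (kernel_mat K x n \<epsilon>) =
               \<epsilon> ^ (n * (n - 1)) * ((det V)\<^sup>2 * det W + R \<epsilon>)"
    using ev
  proof eventually_elim
    case (elim e)
    hence e0: "e \<noteq> 0" by auto
    define Ke where "Ke = kernel_mat K x n e"
    have Kc': "Ke \<in> carrier_mat n n" unfolding Ke_def by simp
    have TK: "T * Ke \<in> carrier_mat n n" using Tc Kc' by simp
    have TT: "transpose_mat T \<in> carrier_mat n n" using Tc by simp
    have dM: "det (Mf e) = det T * det Ke * det T"
      unfolding Mf_def Ke_def[symmetric]
      using det_mult[OF TK TT] det_mult[OF Tc Kc'] det_transpose[OF Tc] by simp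
    have dTV: "det T * det V = 1" using det_mult[OF Tc Vc] TV by simp
    have Mc: "Mf e \<in> carrier_mat n n" unfolding Mf_def by (rule mult_carrier_mat[OF TK[unfolded Ke_def] TT])
    have dMs: "det (Mf e) = e ^ (n * (n - 1)) * det (Nf e)"
      unfolding Nf_def by (rule det_scale[OF Mc e0])
    have "det Ke = (det T * det V)^2 * det Ke" using dTV by simp
    also have "\<dots> = (det V)^2 * det (Mf e)" unfolding dM by (simp add: power2_eq_square)
    also have "\<dots> = e ^ (n * (n - 1)) * ((det V)\<^sup>2 * det W + R e)"
      unfolding dMs R_def by (simp add: algebra_simps)
    finally show ?case unfolding Ke_def .
  qed
  ultimately show ?thesis unfolding V_def W_def by blast
qed


theorem theorem4p1:
  fixes a :: real and n :: nat and K :: "real \<Rightarrow> real \<Rightarrow> real" and x :: "nat \<Rightarrow> real"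
  assumes "a > 0" and "n \<ge> 1" and "Cll n a K"
  shows "(\<exists>R. R \<in> O[at_right 0](\<lambda>\<epsilon>. \<epsilon>) \<and>
            (\<forall>\<^sub>F \<epsilon> in at_right 0. det (kernel_mat K x n \<epsilon>) =
               \<epsilon> ^ (n * (n - 1)) *
               ((det (vandermonde x n (n - 1)))\<^sup>2 * det (wronskian K (n - 1)) + R \<epsilon>)))
       \<and> (\<forall>\<epsilon>0 lam. \<epsilon>0 > 0 \<and>
            (\<forall>\<epsilon>\<in>{0..\<epsilon>0}. psd_mat (kernel_mat K x n \<epsilon>) \<and> ordered_eigenvalues (kernel_mat K x n \<epsilon>) (lam \<epsilon>))
            \<longrightarrow> (\<forall>k<n. (\<lambda>\<epsilon>. lam \<epsilon> k) \<in> O[at_right 0](\<lambda>\<epsilon>. \<epsilon> ^ (2 * k))))"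
proof -
  have P1: "\<exists>R. R \<in> O[at_right 0](\<lambda>\<epsilon>. \<epsilon>) \<and>
            (\<forall>\<^sub>F \<epsilon> in at_right 0. det (kernel_mat K x n \<epsilon>) =
               \<epsilon> ^ (n * (n - 1)) *
               ((det (vandermonde x n (n - 1)))\<^sup>2 * det (wronskian K (n - 1)) + R \<epsilon>))"
  proof (cases "inj_on x {..<n}")
    case True thus ?thesis by (rule part1_inj[OF assms(3) assms(1) assms(2)])
  next
    case False thus ?thesis by (rule part1_noninj[OF assms(2)])
  qed
  have P2: "\<forall>\<epsilon>0 lam. \<epsilon>0 > 0 \<and>
            (\<forall>\<epsilon>\<in>{0..\<epsilon>0}. psd_mat (kernel_mat K x n \<epsilon>) \<and> ordered_eigenvalues (kernel_mat K x n \<epsilon>) (lam \<epsilon>))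
            \<longrightarrow> (\<forall>k<n. (\<lambda>\<epsilon>. lam \<epsilon> k) \<in> O[at_right 0](\<lambda>\<epsilon>. \<epsilon> ^ (2 * k)))"
    using part2[OF assms(3) assms(1)] by blast
  show ?thesis using P1 P2 by blast
qed

end
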